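(* Let $S$ be an ergodic automorphism of a standard probability space $(Y,\mathcal C,\nu)$ with discrete spectrum, and suppose $S^{q_n}\to\mathrm{Id}$ (weakly) on $L^2(Y,\nu)$ for some increasing sequence $(q_n)$ of natural numbers. Let $\varphi:Y\to\{0,1\}$ be measurable, $W$ the weighted operator $W\xi(y)=(-1)^{\varphi(y)}\xi(Sy)$ on $L^2(Y,\nu)$, and $\sigma_{\mathbf 1}$ the spectral measure of the constant function $\mathbf 1$ under $W$. If $r\neq s$ are integers and for some $t\in\mathbb Z$ we have $\int_Y(-1)^{\varphi^{(rtq_n)}}d\nu\to c_1$ and $\int_Y(-1)^{\varphi^{(stq_n)}}d\nu\to c_2$ with $c_1\neq c_2$, then $\sigma_{\mathbf 1}^{(r)}\perp\sigma_{\mathbf 1}^{(s)}$.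
   Context: $\varphi^{(m)}(y)=\varphi(y)+\varphi(Sy)+\dots+\varphi(S^{m-1}y)$ for $m>0$, $\varphi^{(0)}=0$, extended to $m\in\mathbb Z$ by the cocycle identity $\varphi^{(m_1+m_2)}=\varphi^{(m_1)}+\varphi^{(m_2)}\circ S^{m_1}$ (values taken mod 2). The spectral measure is the measure on the unit circle with $\hat\sigma_{\mathbf 1}(m)=\langle W^m\mathbf 1,\mathbf 1\rangle=\int_Y(-1)^{\varphi^{(m)}}d\nu$. For a measure $\sigma$ on the circle and $k\in\mathbb Z$, $\sigma^{(k)}$ is its image under $z\mapsto z^k$. *)

theory Defs
  imports "HOL-Probability.Probability"
begin

definition L2fun :: "'a measure \<Rightarrow> ('a \<Rightarrow> complex) \<Rightarrow> bool" where
  "L2fun M f \<longleftrightarrow> f \<in> borel_measurable M \<and> integrable M (\<lambda>y. (cmod (f y))\<^sup>2)"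

definition mp_automorphism :: "'a measure \<Rightarrow> ('a \<Rightarrow> 'a) \<Rightarrow> bool" where
  "mp_automorphism M S \<longleftrightarrow> bij S \<and> S \<in> measurable M M \<and> inv S \<in> measurable M M
     \<and> distr M M S = M \<and> distr M M (inv S) = M"

definition ergodic :: "'a measure \<Rightarrow> ('a \<Rightarrow> 'a) \<Rightarrow> bool" where
  "ergodic M S \<longleftrightarrow> (\<forall>A\<in>sets M. S -` A \<inter> space M = A \<longrightarrow>
      measure M A = 0 \<or> measure M A = 1)"

definition eigenfunction :: "'a measure \<Rightarrow> ('a \<Rightarrow> 'a) \<Rightarrow> ('a \<Rightarrow> complex) \<Rightarrow> bool" where
  "eigenfunction M S f \<longleftrightarrow> L2fun M f \<and> (\<exists>e::complex. AE y in M. f (S y) = e * f y)"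

definition discrete_spectrum :: "'a measure \<Rightarrow> ('a \<Rightarrow> 'a) \<Rightarrow> bool" where
  "discrete_spectrum M S \<longleftrightarrow> (\<forall>g. L2fun M g \<longrightarrow> (\<forall>\<epsilon>>0. \<exists>F c. finite F \<and>
      (\<forall>f\<in>F. eigenfunction M S f) \<and>
      (\<integral>y. (cmod (g y - (\<Sum>f\<in>F. c f * f y)))\<^sup>2 \<partial>M) < \<epsilon>))"

definition weakly_rigid :: "'a measure \<Rightarrow> ('a \<Rightarrow> 'a) \<Rightarrow> (nat \<Rightarrow> nat) \<Rightarrow> bool" where
  "weakly_rigid M S q \<longleftrightarrow> (\<forall>f g. L2fun M f \<longrightarrow> L2fun M g \<longrightarrow>
      ((\<lambda>n. \<integral>y. f ((S ^^ q n) y) * cnj (g y) \<partial>M) \<longlonglongrightarrow> (\<integral>y. f y * cnj (g y) \<partial>M)))"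

text \<open>Cocycle phi^(m) (values mod 2), for integer m, via the cocycle identity.\<close>
definition cocycle :: "('a \<Rightarrow> 'a) \<Rightarrow> ('a \<Rightarrow> nat) \<Rightarrow> int \<Rightarrow> 'a \<Rightarrow> nat" where
  "cocycle S \<phi> m y = (if 0 \<le> m then (\<Sum>k<nat m. \<phi> ((S ^^ k) y)) mod 2
      else (\<Sum>k\<in>{1..nat (- m)}. \<phi> ((inv S ^^ k) y)) mod 2)"

text \<open>sigma is the spectral measure of the constant function 1 under W:
  a finite Borel measure on the unit circle with Fourier coefficients
  hat sigma(m) = integral of (-1)^(phi^(m)).\<close>
definition is_spectral_measure_one ::
  "'a measure \<Rightarrow> ('a \<Rightarrow> 'a) \<Rightarrow> ('a \<Rightarrow> nat) \<Rightarrow> complex measure \<Rightarrow> bool" where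
  "is_spectral_measure_one M S \<phi> \<sigma> \<longleftrightarrow> sets \<sigma> = sets borel \<and> finite_measure \<sigma> \<and>
      emeasure \<sigma> (UNIV - sphere 0 1) = 0 \<and>
      (\<forall>m::int. (\<integral>z. z powi m \<partial>\<sigma>) = complex_of_real (\<integral>y. (-1::real) ^ cocycle S \<phi> m y \<partial>M))"

definition pow_image :: "complex measure \<Rightarrow> int \<Rightarrow> complex measure" where
  "pow_image \<sigma> k = distr \<sigma> borel (\<lambda>z. z powi k)"

definition mutually_singular :: "'b measure \<Rightarrow> 'b measure \<Rightarrow> bool" where
  "mutually_singular \<mu> \<tau> \<longleftrightarrow> (\<exists>A\<in>sets \<mu>. emeasure \<mu> A = 0 \<and> emeasure \<tau> (space \<tau> - A) = 0)"

end

theory Submission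
  imports Defs
begin

lemma sing_lemma:
  fixes \<mu>1 \<mu>2 :: "complex measure" and h :: "nat \<Rightarrow> complex \<Rightarrow> complex" and c1 c2 :: complex
  assumes s1: "sets \<mu>1 = sets borel" and s2: "sets \<mu>2 = sets borel"
    and f1: "finite_measure \<mu>1" and f2: "finite_measure \<mu>2"
    and hm: "\<And>n. h n \<in> borel_measurable borel"
    and Q1: "\<And>H. H \<in> borel_measurable borel \<Longrightarrow> (\<And>x. 0 \<le> H x \<and> H x \<le> 1) \<Longrightarrow>
       (\<lambda>n. \<integral>x. complex_of_real (H x) * h n x \<partial>\<mu>1) \<longlonglongrightarrow> c1 * complex_of_real (\<integral>x. H x \<partial>\<mu>1)"
    and Q2: "\<And>H. H \<in> borel_measurable borel \<Longrightarrow> (\<And>x. 0 \<le> H x \<and> H x \<le> 1) \<Longrightarrow>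
       (\<lambda>n. \<integral>x. complex_of_real (H x) * h n x \<partial>\<mu>2) \<longlonglongrightarrow> c2 * complex_of_real (\<integral>x. H x \<partial>\<mu>2)"
    and c: "c1 \<noteq> c2"
  shows "mutually_singular \<mu>1 \<mu>2"
proof -
  interpret m1: finite_measure \<mu>1 by fact
  interpret m2: finite_measure \<mu>2 by fact
  define \<rho> where "\<rho> = sup_measure' \<mu>1 \<mu>2"
  have s21: "sets \<mu>2 = sets \<mu>1" using s1 s2 by simp
  have sr: "sets \<rho> = sets borel" unfolding \<rho>_def using s21 s1 by simp
  have sp1: "space \<mu>1 = UNIV" using sets_eq_imp_space_eq[OF s1] by simp
  have sp2: "space \<mu>2 = UNIV" using sets_eq_imp_space_eq[OF s2] by simp
  have spr: "space \<rho> = UNIV" using sets_eq_imp_space_eq[OF sr] by simp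
  have le1: "emeasure \<mu>1 X \<le> emeasure \<rho> X" if "X \<in> sets borel" for X
    unfolding \<rho>_def using le_emeasure_sup_measure'1[OF s21] that s1 by simp
  have le2: "emeasure \<mu>2 X \<le> emeasure \<rho> X" if "X \<in> sets borel" for X
    unfolding \<rho>_def using le_emeasure_sup_measure'2[OF s21] that s1 by simp
  have "emeasure \<rho> UNIV \<le> emeasure \<mu>1 UNIV + emeasure \<mu>2 UNIV"
    unfolding \<rho>_def
    apply (subst emeasure_sup_measure'[OF s21])
     apply (simp add: s1)
    apply (rule SUP_least)
    apply (rule add_mono)
     apply (rule emeasure_mono) apply simp apply (simp add: s1)
     apply (rule emeasure_mono) apply simp apply (simp add: s2)
    done
  also have "\<dots> < \<infinity>" using m1.emeasure_real m2.emeasure_real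
    by (metis ennreal_add_less_top infinity_ennreal_def m1.emeasure_finite m2.emeasure_finite top.not_eq_extremum)
  finally have "emeasure \<rho> UNIV \<noteq> \<infinity>" by simp
  then interpret r: finite_measure \<rho> by (intro finite_measureI) (simp add: spr)
  have ac1: "absolutely_continuous \<rho> \<mu>1"
    unfolding absolutely_continuous_def
  proof
    fix X assume "X \<in> null_sets \<rho>"
    then have "X \<in> sets borel" "emeasure \<rho> X = 0" using sr by auto
    then show "X \<in> null_sets \<mu>1" using le1[of X] s1 by (simp add: null_sets_def)
  qed
  have ac2: "absolutely_continuous \<rho> \<mu>2"
    unfolding absolutely_continuous_def
  proof
    fix X assume "X \<in> null_sets \<rho>"
    then have "X \<in> sets borel" "emeasure \<rho> X = 0" using sr by auto
    then show "X \<in> null_sets \<mu>2" using le2[of X] s2 by (simp add: null_sets_def)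
  qed
  have sm1: "sets \<mu>1 = sets \<rho>" using s1 sr by simp
  have sm2: "sets \<mu>2 = sets \<rho>" using s2 sr by simp
  obtain D1 where D1m: "D1 \<in> borel_measurable \<rho>" and D1e: "AE x in \<rho>. RN_deriv \<rho> \<mu>1 x = ennreal (D1 x)"
    and D1p: "\<And>x. 0 \<le> D1 x"
    using r.real_RN_deriv[OF f1 ac1 sm1] by blast
  obtain D2 where D2m: "D2 \<in> borel_measurable \<rho>" and D2e: "AE x in \<rho>. RN_deriv \<rho> \<mu>2 x = ennreal (D2 x)"
    and D2p: "\<And>x. 0 \<le> D2 x"
    using r.real_RN_deriv[OF f2 ac2 sm2] by blast
  have dens1: "density \<rho> D1 = \<mu>1"
  proof -
    have "density \<rho> (\<lambda>x. ennreal (D1 x)) = density \<rho> (RN_deriv \<rho> \<mu>1)"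
      by (rule density_cong) (use D1m D1e in \<open>auto elim: AE_mp\<close>)
    also have "\<dots> = \<mu>1" by (rule r.density_RN_deriv[OF ac1 sm1])
    finally show ?thesis .
  qed
  have dens2: "density \<rho> D2 = \<mu>2"
  proof -
    have "density \<rho> (\<lambda>x. ennreal (D2 x)) = density \<rho> (RN_deriv \<rho> \<mu>2)"
      by (rule density_cong) (use D2m D2e in \<open>auto elim: AE_mp\<close>)
    also have "\<dots> = \<mu>2" by (rule r.density_RN_deriv[OF ac2 sm2])
    finally show ?thesis .
  qed
  have mr: "\<And>N. measurable \<rho> N = measurable borel N" using measurable_cong_sets[OF sr refl] .
  note hm[measurable]
  have D1b[measurable]: "D1 \<in> borel_measurable borel" unfolding measurable_cong_sets[OF sr[symmetric] refl] by (rule D1m)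
  have D2b[measurable]: "D2 \<in> borel_measurable borel" unfolding measurable_cong_sets[OF sr[symmetric] refl] by (rule D2m)
  define K where "K x = D1 x * D2 x / (1 + D1 x + D2 x)" for x
  define H1 where "H1 x = D2 x / (1 + D1 x + D2 x)" for x
  define H2 where "H2 x = D1 x / (1 + D1 x + D2 x)" for x
  have H1m[measurable]: "H1 \<in> borel_measurable borel" unfolding H1_def by measurable
  have H2m[measurable]: "H2 \<in> borel_measurable borel" unfolding H2_def by measurable
  have H1b: "0 \<le> H1 x \<and> H1 x \<le> 1" for x unfolding H1_def using D1p[of x] D2p[of x] by auto
  have H2b: "0 \<le> H2 x \<and> H2 x \<le> 1" for x unfolding H2_def using D1p[of x] D2p[of x] by auto
  have K1: "D1 x * H1 x = K x" for x unfolding K_def H1_def by simp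
  have K2: "D2 x * H2 x = K x" for x unfolding K_def H2_def by simp
  have eq1: "(\<integral>x. complex_of_real (H1 x) * h n x \<partial>\<mu>1) = (\<integral>x. complex_of_real (K x) * h n x \<partial>\<rho>)" for n
  proof -
    have "(\<integral>x. complex_of_real (H1 x) * h n x \<partial>\<mu>1) = (\<integral>x. complex_of_real (H1 x) * h n x \<partial>density \<rho> D1)"
      by (simp add: dens1)
    also have "\<dots> = (\<integral>x. D1 x *\<^sub>R (complex_of_real (H1 x) * h n x) \<partial>\<rho>)"
      by (rule integral_density) (simp_all add: mr D1p D2p)
    also have "\<dots> = (\<integral>x. complex_of_real (K x) * h n x \<partial>\<rho>)"
      by (rule Bochner_Integration.integral_cong) (auto simp: scaleR_conv_of_real K1[symmetric])
    finally show ?thesis .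
  qed
  have eq2: "(\<integral>x. complex_of_real (H2 x) * h n x \<partial>\<mu>2) = (\<integral>x. complex_of_real (K x) * h n x \<partial>\<rho>)" for n
  proof -
    have "(\<integral>x. complex_of_real (H2 x) * h n x \<partial>\<mu>2) = (\<integral>x. complex_of_real (H2 x) * h n x \<partial>density \<rho> D2)"
      by (simp add: dens2)
    also have "\<dots> = (\<integral>x. D2 x *\<^sub>R (complex_of_real (H2 x) * h n x) \<partial>\<rho>)"
      by (rule integral_density) (simp_all add: mr D1p D2p)
    also have "\<dots> = (\<integral>x. complex_of_real (K x) * h n x \<partial>\<rho>)"
      by (rule Bochner_Integration.integral_cong) (auto simp: scaleR_conv_of_real K2[symmetric])
    finally show ?thesis .
  qed
  have i1: "(\<integral>x. H1 x \<partial>\<mu>1) = (\<integral>x. K x \<partial>\<rho>)"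
  proof -
    have "(\<integral>x. H1 x \<partial>\<mu>1) = (\<integral>x. H1 x \<partial>density \<rho> D1)" by (simp add: dens1)
    also have "\<dots> = (\<integral>x. D1 x *\<^sub>R H1 x \<partial>\<rho>)"
      by (rule integral_density) (simp_all add: mr D1p D2p)
    finally show ?thesis by (simp add: K1)
  qed
  have i2: "(\<integral>x. H2 x \<partial>\<mu>2) = (\<integral>x. K x \<partial>\<rho>)"
  proof -
    have "(\<integral>x. H2 x \<partial>\<mu>2) = (\<integral>x. H2 x \<partial>density \<rho> D2)" by (simp add: dens2)
    also have "\<dots> = (\<integral>x. D2 x *\<^sub>R H2 x \<partial>\<rho>)"
      by (rule integral_density) (simp_all add: mr D1p D2p)
    finally show ?thesis by (simp add: K2)
  qed
  have L1: "(\<lambda>n. \<integral>x. complex_of_real (K x) * h n x \<partial>\<rho>) \<longlonglongrightarrow> c1 * complex_of_real (\<integral>x. K x \<partial>\<rho>)"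
    using Q1[OF H1m H1b] unfolding eq1 i1 .
  have L2: "(\<lambda>n. \<integral>x. complex_of_real (K x) * h n x \<partial>\<rho>) \<longlonglongrightarrow> c2 * complex_of_real (\<integral>x. K x \<partial>\<rho>)"
    using Q2[OF H2m H2b] unfolding eq2 i2 .
  have "c1 * complex_of_real (\<integral>x. K x \<partial>\<rho>) = c2 * complex_of_real (\<integral>x. K x \<partial>\<rho>)"
    using LIMSEQ_unique[OF L1 L2] .
  with c have iK: "(\<integral>x. K x \<partial>\<rho>) = 0" by simp
  have Km: "K \<in> borel_measurable borel" unfolding K_def by measurable
  have Kb: "0 \<le> K x \<and> K x \<le> D1 x" for x
  proof -
    have "K x = D1 x * H1 x" by (simp add: K1)
    then show ?thesis using H1b[of x] D1p[of x] by (simp add: mult_left_le)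
  qed
  have Kint: "integrable \<rho> K"
  proof -
    have "integrable \<mu>1 H1"
      using H1b H1m s1 by (intro m1.integrable_const_bound[of _ 1]) (auto simp: measurable_def)
    then have "integrable (density \<rho> D1) H1" by (simp add: dens1)
    then have "integrable \<rho> (\<lambda>x. D1 x *\<^sub>R H1 x)"
      by (subst (asm) integrable_density) (simp_all add: mr D1p D2p)
    then show ?thesis by (simp add: K1)
  qed
  have "AE x in \<rho>. K x = 0"
    using integral_nonneg_eq_0_iff_AE[OF Kint] iK Kb by simp
  then have AE0: "AE x in \<rho>. D1 x = 0 \<or> D2 x = 0"
  proof (eventually_elim)
    case (elim x)
    have "1 + D1 x + D2 x > 0" using D1p[of x] D2p[of x] by simp
    then show ?case using elim by (auto simp: K_def)
  qed
  define A where "A = {x. D1 x = 0}"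
  have Ab: "A \<in> sets borel" unfolding A_def by measurable
  have "emeasure \<mu>1 A = (\<integral>\<^sup>+x\<in>A. D1 x \<partial>\<rho>)"
    by (subst dens1[symmetric], subst emeasure_density) (use D1m Ab sr in auto)
  also have "\<dots> = 0" by (rule nn_integral_zero') (auto simp: A_def indicator_def)
  finally have z1: "emeasure \<mu>1 A = 0" .
  have "emeasure \<mu>2 (space \<mu>2 - A) = (\<integral>\<^sup>+x\<in>(UNIV - A). D2 x \<partial>\<rho>)"
    by (subst dens2[symmetric], subst emeasure_density) (use D2m Ab sr sp2 in auto)
  also have "\<dots> = 0" by (rule nn_integral_zero', use AE0 in eventually_elim) (auto simp: A_def indicator_def)
  finally have z2: "emeasure \<mu>2 (space \<mu>2 - A) = 0" .
  show ?thesis unfolding mutually_singular_def using Ab z1 z2 s1 by auto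
qed

lemma approx_lim:
  fixes a :: "nat \<Rightarrow> nat \<Rightarrow> complex" and b :: "nat \<Rightarrow> complex" and a' :: "nat \<Rightarrow> complex"
    and b' :: complex and \<delta> :: "nat \<Rightarrow> real"
  assumes lim: "\<And>j. (\<lambda>n. a j n) \<longlonglongrightarrow> b j"
    and d1: "\<And>j n. cmod (a j n - a' n) \<le> \<delta> j" and d2: "\<And>j. cmod (b j - b') \<le> \<delta> j"
    and d0: "\<delta> \<longlonglongrightarrow> 0"
  shows "a' \<longlonglongrightarrow> b'"
proof (rule LIMSEQ_I)
  fix e :: real assume e: "0 < e"
  then obtain j0 where j0: "\<forall>j\<ge>j0. norm (\<delta> j - 0) < e/3" using LIMSEQ_D[OF d0, of "e/3"] by auto
  then have dj: "\<delta> j0 < e/3" by auto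
  obtain N where N: "\<forall>n\<ge>N. norm (a j0 n - b j0) < e/3" using LIMSEQ_D[OF lim[of j0], of "e/3"] e by auto
  show "\<exists>no. \<forall>n\<ge>no. norm (a' n - b') < e"
  proof (intro exI allI impI)
    fix n assume "N \<le> n"
    have "a' n - b' = (a' n - a j0 n) + (a j0 n - b j0) + (b j0 - b')" by simp
    then have "norm (a' n - b') \<le> norm (a' n - a j0 n) + norm (a j0 n - b j0) + norm (b j0 - b')"
      by (metis norm_triangle_ineq order_trans add_right_mono)
    also have "norm (a' n - a j0 n) = cmod (a j0 n - a' n)" by (simp add: norm_minus_commute)
    finally show "norm (a' n - b') < e" using d1[of j0 n] d2[of j0] N[rule_format, OF \<open>N \<le> n\<close>] dj by simp
  qed
qed

lemma powi_meas[measurable]: "(\<lambda>z::complex. z powi k) \<in> borel_measurable borel"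
  by (cases "k \<ge> 0") (simp_all add: power_int_def)

lemma norm_powi_sphere: "z \<in> sphere 0 1 \<Longrightarrow> cmod (z powi k) = 1"
  by (simp add: norm_power_int)

locale circ =
  fixes \<sigma> :: "complex measure"
  assumes sets_\<sigma>: "sets \<sigma> = sets borel" and fin: "finite_measure \<sigma>"
    and sph: "emeasure \<sigma> (UNIV - sphere 0 1) = 0"
begin

sublocale finite_measure \<sigma> by (rule fin)

lemma space_\<sigma>: "space \<sigma> = UNIV" using sets_eq_imp_space_eq[OF sets_\<sigma>] by simp

lemma meas_\<sigma>: "measurable \<sigma> N = measurable borel N" using measurable_cong_sets[OF sets_\<sigma> refl] .

lemma AE_sph: "AE z in \<sigma>. z \<in> sphere 0 1"
proof (rule AE_I'[of "UNIV - sphere 0 1"])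
  show "UNIV - sphere 0 1 \<in> null_sets \<sigma>" using sph sets_\<sigma> by (auto simp: null_sets_def)
qed (auto simp: space_\<sigma>)

definition Qc :: "(nat \<Rightarrow> int) \<Rightarrow> complex \<Rightarrow> (complex \<Rightarrow> complex) \<Rightarrow> bool" where
  "Qc m c G \<longleftrightarrow> (\<lambda>n. \<integral>z. G z * z powi m n \<partial>\<sigma>) \<longlonglongrightarrow> c * (\<integral>z. G z \<partial>\<sigma>)"

definition BM :: "(complex \<Rightarrow> complex) \<Rightarrow> bool" where
  "BM G \<longleftrightarrow> G \<in> borel_measurable borel \<and> (\<exists>B. \<forall>z\<in>sphere 0 1. cmod (G z) \<le> B)"

lemma BM_int: assumes "BM G" shows "integrable \<sigma> G"
proof -
  obtain B where B: "\<forall>z\<in>sphere 0 1. cmod (G z) \<le> B" and m: "G \<in> borel_measurable borel"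
    using assms BM_def by auto
  show ?thesis
    by (rule integrable_const_bound[of _ B]) (use AE_sph B m meas_\<sigma> in \<open>auto elim: AE_mp\<close>)
qed

lemma BM_mult: "BM G \<Longrightarrow> BM H \<Longrightarrow> BM (\<lambda>z. G z * H z)"
proof -
  assume a: "BM G" "BM H"
  then obtain B1 B2 where B1: "\<forall>z\<in>sphere 0 1. cmod (G z) \<le> B1" and B2: "\<forall>z\<in>sphere 0 1. cmod (H z) \<le> B2"
    and m: "G \<in> borel_measurable borel" "H \<in> borel_measurable borel" by (auto simp: BM_def)
  have "\<forall>z\<in>sphere 0 1. cmod (G z * H z) \<le> B1 * B2"
    using B1 B2 by (auto simp: norm_mult intro!: mult_mono order_trans[OF norm_ge_zero])
  then show ?thesis using m by (auto simp: BM_def)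
qed

lemma BM_add: "BM G \<Longrightarrow> BM H \<Longrightarrow> BM (\<lambda>z. G z + H z)"
proof -
  assume a: "BM G" "BM H"
  then obtain B1 B2 where B1: "\<forall>z\<in>sphere 0 1. cmod (G z) \<le> B1" and B2: "\<forall>z\<in>sphere 0 1. cmod (H z) \<le> B2"
    and m: "G \<in> borel_measurable borel" "H \<in> borel_measurable borel" by (auto simp: BM_def)
  have "\<forall>z\<in>sphere 0 1. cmod (G z + H z) \<le> B1 + B2"
    using B1 B2 by (auto intro!: order_trans[OF norm_triangle_ineq] add_mono)
  then show ?thesis using m by (auto simp: BM_def)
qed

lemma BM_const: "BM (\<lambda>z. a)" by (auto simp: BM_def)

lemma BM_powi: "BM (\<lambda>z. z powi k)"
  unfolding BM_def using norm_powi_sphere by auto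

lemma BM_int_pow: "BM G \<Longrightarrow> integrable \<sigma> (\<lambda>z. G z * z powi k)"
  by (intro BM_int BM_mult BM_powi)

lemma Qc_add: "BM G \<Longrightarrow> BM H \<Longrightarrow> Qc m c G \<Longrightarrow> Qc m c H \<Longrightarrow> Qc m c (\<lambda>z. G z + H z)"
  unfolding Qc_def
  by (simp add: distrib_right distrib_left BM_int BM_int_pow tendsto_add)

lemma Qc_scale: "Qc m c G \<Longrightarrow> Qc m c (\<lambda>z. a * G z)"
  unfolding Qc_def
  by (simp add: mult.assoc mult.left_commute[of c a] tendsto_mult_left)

lemma Qc_cong: "G \<in> borel_measurable borel \<Longrightarrow> H \<in> borel_measurable borel \<Longrightarrow> (\<forall>z\<in>sphere 0 1. G z = H z)
  \<Longrightarrow> Qc m c G \<Longrightarrow> Qc m c H"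
proof -
  assume m: "G \<in> borel_measurable borel" "H \<in> borel_measurable borel" and e: "\<forall>z\<in>sphere 0 1. G z = H z"
    and q: "Qc m c G"
  have AE: "AE z in \<sigma>. G z = H z" using AE_sph by eventually_elim (use e in auto)
  have i1: "(\<integral>z. G z \<partial>\<sigma>) = (\<integral>z. H z \<partial>\<sigma>)"
    by (rule integral_cong_AE) (use m AE in \<open>simp_all add: meas_\<sigma>\<close>)
  have i2: "(\<integral>z. G z * z powi k \<partial>\<sigma>) = (\<integral>z. H z * z powi k \<partial>\<sigma>)" for k
    by (rule integral_cong_AE) (use m AE in \<open>auto simp: meas_\<sigma>\<close>)
  show ?thesis using q unfolding Qc_def i1 i2 .
qed

lemma Qc_sum: "finite I \<Longrightarrow> (\<And>i. i \<in> I \<Longrightarrow> BM (G i) \<and> Qc m c (G i)) \<Longrightarrow>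
   BM (\<lambda>z. \<Sum>i\<in>I. G i z) \<and> Qc m c (\<lambda>z. \<Sum>i\<in>I. G i z)"
proof (induction I rule: finite_induct)
  case empty
  then show ?case by (simp add: BM_const Qc_def)
next
  case (insert x F)
  then show ?case by (simp add: BM_add Qc_add)
qed

lemma Qc_lim:
  assumes Gm: "G \<in> borel_measurable borel"
    and Gj: "\<And>j. BM (Gj j)" and Q: "\<And>j. Qc m c (Gj j)"
    and B: "\<And>j z. z \<in> sphere 0 1 \<Longrightarrow> cmod (Gj j z) \<le> B"
    and conv: "\<And>z. z \<in> sphere 0 1 \<Longrightarrow> (\<lambda>j. Gj j z) \<longlonglongrightarrow> G z"
  shows "Qc m c G"
proof -
  have GB: "cmod (G z) \<le> B" if "z \<in> sphere 0 1" for z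
    using conv[OF that] B[OF that] by (intro tendsto_le[OF _ tendsto_const tendsto_norm]) auto
  have BMG: "BM G" using Gm GB unfolding BM_def by (auto intro!: exI[of _ B])
  define \<delta> where "\<delta> j = (1 + cmod c) * (\<integral>z. cmod (Gj j z - G z) \<partial>\<sigma>)" for j
  have mGj: "Gj j \<in> borel_measurable borel" for j using Gj BM_def by auto
  have d0: "(\<lambda>j. \<integral>z. cmod (Gj j z - G z) \<partial>\<sigma>) \<longlonglongrightarrow> (\<integral>z. 0 \<partial>\<sigma>)"
  proof (rule integral_dominated_convergence[where w="\<lambda>z. 2 * B"])
    show "(\<lambda>z. 0::real) \<in> borel_measurable \<sigma>" by simp
    show "(\<lambda>z. cmod (Gj j z - G z)) \<in> borel_measurable \<sigma>" for j using mGj Gm by (simp add: meas_\<sigma>)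
    show "integrable \<sigma> (\<lambda>z. 2 * B)" by simp
    show "AE z in \<sigma>. (\<lambda>j. cmod (Gj j z - G z)) \<longlonglongrightarrow> 0"
      using AE_sph proof eventually_elim
      case (elim z)
      show ?case using tendsto_norm[OF tendsto_diff[OF conv[OF elim] tendsto_const[of "G z"]]] by simp
    qed
    show "AE z in \<sigma>. norm (cmod (Gj j z - G z)) \<le> 2 * B" for j
      using AE_sph proof eventually_elim
      case (elim z)
      have "cmod (Gj j z - G z) \<le> cmod (Gj j z) + cmod (G z)" by (rule norm_triangle_ineq4)
      then show ?case using B[OF elim, of j] GB[OF elim] by simp
    qed
  qed
  have d0': "\<delta> \<longlonglongrightarrow> 0" unfolding \<delta>_def using tendsto_mult_left[OF d0, of "1 + cmod c"] by simp
  show ?thesis unfolding Qc_def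
  proof (rule approx_lim[where \<delta>=\<delta>])
    show "(\<lambda>n. \<integral>z. Gj j z * z powi m n \<partial>\<sigma>) \<longlonglongrightarrow> c * (\<integral>z. Gj j z \<partial>\<sigma>)" for j
      using Q[of j] unfolding Qc_def .
    have intd: "integrable \<sigma> (\<lambda>z. cmod (Gj j z - G z))" for j
      using BM_int[OF BM_add[OF Gj[of j] BM_mult[OF BM_const[of "-1"] BMG]]] by (simp add: integrable_norm)
    show "cmod ((\<integral>z. Gj j z * z powi m n \<partial>\<sigma>) - (\<integral>z. G z * z powi m n \<partial>\<sigma>)) \<le> \<delta> j" for j n
    proof -
      have "(\<integral>z. Gj j z * z powi m n \<partial>\<sigma>) - (\<integral>z. G z * z powi m n \<partial>\<sigma>)
          = (\<integral>z. (Gj j z - G z) * z powi m n \<partial>\<sigma>)"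
        by (simp add: left_diff_distrib BM_int_pow Gj BMG)
      also have "cmod \<dots> \<le> (\<integral>z. cmod ((Gj j z - G z) * z powi m n) \<partial>\<sigma>)" by (rule integral_norm_bound)
      also have "\<dots> = (\<integral>z. cmod (Gj j z - G z) \<partial>\<sigma>)"
        by (rule integral_cong_AE) (use AE_sph mGj Gm in \<open>auto simp: meas_\<sigma> norm_mult norm_powi_sphere elim: AE_mp\<close>)
      also have "\<dots> \<le> \<delta> j"
      proof -
        have nn: "0 \<le> (\<integral>z. cmod (Gj j z - G z) \<partial>\<sigma>)" by (rule integral_nonneg_AE) simp
        show ?thesis unfolding \<delta>_def using nn by (simp add: distrib_right)
      qed
      finally show ?thesis .
    qed
    show "cmod (c * (\<integral>z. Gj j z \<partial>\<sigma>) - c * (\<integral>z. G z \<partial>\<sigma>)) \<le> \<delta> j" for j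
    proof -
      have "c * (\<integral>z. Gj j z \<partial>\<sigma>) - c * (\<integral>z. G z \<partial>\<sigma>) = c * (\<integral>z. Gj j z - G z \<partial>\<sigma>)"
        by (simp add: right_diff_distrib BM_int Gj BMG)
      also have "cmod \<dots> \<le> cmod c * (\<integral>z. cmod (Gj j z - G z) \<partial>\<sigma>)"
        by (simp add: norm_mult mult_left_mono integral_norm_bound)
      also have "\<dots> \<le> \<delta> j" unfolding \<delta>_def
        by (rule mult_right_mono) (auto simp: integral_nonneg_AE)
      finally show ?thesis .
    qed
    show "\<delta> \<longlonglongrightarrow> 0" by (rule d0')
  qed
qed


end

inductive TP :: "(complex \<Rightarrow> complex) \<Rightarrow> bool" where
  TP_mono: "TP (\<lambda>z. a * z powi k)"
| TP_add: "TP P \<Longrightarrow> TP Q \<Longrightarrow> TP (\<lambda>z. P z + Q z)"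
| TP_cong: "TP P \<Longrightarrow> (\<And>z. z \<in> sphere 0 1 \<Longrightarrow> Q z = P z) \<Longrightarrow> Q \<in> borel_measurable borel \<Longrightarrow> TP Q"

lemma TP_meas: "TP P \<Longrightarrow> P \<in> borel_measurable borel"
proof (induction rule: TP.induct)
  case (TP_mono a k)
  then show ?case by measurable
next
  case (TP_add P Q)
  then show ?case by measurable
qed

lemma TP_eq: "TP P \<Longrightarrow> (\<And>z. Q z = P z) \<Longrightarrow> TP Q"
proof -
  assume "TP P" "\<And>z. Q z = P z"
  then have "Q = P" by auto
  with \<open>TP P\<close> show ?thesis by simp
qed

lemma TP_const: "TP (\<lambda>z. a)"
  using TP_mono[of a 0] by simp

lemma TP_mult_mono: "TP Q \<Longrightarrow> TP (\<lambda>z. (a * z powi k) * Q z)"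
proof (induction rule: TP.induct)
  case (TP_mono b l)
  show ?case
  proof (rule TP_cong[OF TP.TP_mono[of "a * b" "k + l"]])
    fix z :: complex assume "z \<in> sphere 0 1"
    then have "z \<noteq> 0" by auto
    then show "a * z powi k * (b * z powi l) = a * b * z powi (k + l)"
      by (simp add: power_int_add)
  qed simp
next
  case (TP_add P Q)
  show ?case by (rule TP_eq[OF TP.TP_add[OF TP_add.IH]]) (simp add: distrib_left)
next
  case (TP_cong P Q)
  show ?case
    by (rule TP.TP_cong[OF TP_cong.IH]) (use TP_cong.hyps in auto)
qed

lemma TP_mult: "TP P \<Longrightarrow> TP Q \<Longrightarrow> TP (\<lambda>z. P z * Q z)"
proof (induction rule: TP.induct)
  case (TP_mono a k)
  then show ?case by (rule TP_mult_mono)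
next
  case (TP_add P1 P2)
  show ?case by (rule TP_eq[OF TP.TP_add[OF TP_add.IH(1)[OF TP_add.prems] TP_add.IH(2)[OF TP_add.prems]]]) (auto simp: distrib_right)
next
  case (TP_cong P1 P2)
  show ?case
    by (rule TP.TP_cong[OF TP_cong.IH[OF TP_cong.prems]])
       (use TP_cong.hyps TP_meas[OF TP_cong.prems] in auto)
qed

lemma inverse_sphere: "z \<in> sphere 0 1 \<Longrightarrow> inverse z = cnj z"
proof -
  assume "z \<in> sphere 0 1"
  then have "z * cnj z = 1" using complex_norm_square[of z] by simp
  then show ?thesis by (metis inverse_unique)
qed

lemma TP_Re: "TP (\<lambda>z. complex_of_real (Re z))"
proof (rule TP_cong[OF TP_add[OF TP_mono[of "1/2" 1] TP_mono[of "1/2" "-1"]]])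
  fix z :: complex assume z: "z \<in> sphere 0 1"
  have "z + cnj z = complex_of_real (2 * Re z)" by (rule complex_add_cnj)
  then show "complex_of_real (Re z) = 1 / 2 * z powi 1 + 1 / 2 * z powi - 1"
    using inverse_sphere[OF z] by (simp add: power_int_minus field_simps)
qed simp

lemma TP_Im: "TP (\<lambda>z. complex_of_real (Im z))"
proof (rule TP_cong[OF TP_add[OF TP_mono[of "-\<i>/2" 1] TP_mono[of "\<i>/2" "-1"]]])
  fix z :: complex assume z: "z \<in> sphere 0 1"
  have "complex_of_real (Im z) = - \<i> / 2 * (z - cnj z)"
    by (simp add: complex_eq_iff)
  then show "complex_of_real (Im z) = - \<i> / 2 * z powi 1 + \<i> / 2 * z powi - 1"
    using inverse_sphere[OF z] by (simp add: power_int_minus field_simps)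
qed simp

lemma TP_realpoly: "real_polynomial_function p \<Longrightarrow> TP (\<lambda>z. complex_of_real (p z))"
proof (induction rule: real_polynomial_function.induct)
  case (linear f)
  have lf: "linear f" using linear by (rule bounded_linear.linear)
  define a1 where "a1 = f 1"
  define a2 where "a2 = f \<i>"
  have eq: "f z = Re z * a1 + Im z * a2" for z
  proof -
    have zz: "z = Re z *\<^sub>R 1 + Im z *\<^sub>R \<i>" by (simp add: complex_eq_iff)
    have "f z = f (Re z *\<^sub>R 1 + Im z *\<^sub>R \<i>)" using zz by (rule arg_cong)
    also have "\<dots> = f (Re z *\<^sub>R 1) + f (Im z *\<^sub>R \<i>)" by (rule linear_add[OF lf])
    also have "\<dots> = Re z * a1 + Im z * a2" by (simp only: linear_scale[OF lf] real_scaleR_def a1_def a2_def)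
    finally show ?thesis .
  qed
  show ?case
    by (rule TP_eq[OF TP_add[OF TP_mult[OF TP_Re TP_const[of "complex_of_real a1"]]
          TP_mult[OF TP_Im TP_const[of "complex_of_real a2"]]]]) (simp add: eq)
next
  case (const c)
  then show ?case by (rule TP_const)
next
  case (add f g)
  show ?case by (rule TP_eq[OF TP_add[OF add.IH]]) auto
next
  case (mult f g)
  show ?case by (rule TP_eq[OF TP_mult[OF mult.IH]]) auto
qed

lemma TP_poly: "polynomial_function g \<Longrightarrow> TP g"
proof -
  assume "polynomial_function g"
  then have r: "real_polynomial_function (Re \<circ> g)" and i: "real_polynomial_function (Im \<circ> g)"
    unfolding polynomial_function_def using bounded_linear_Re bounded_linear_Im by auto
  show ?thesis
    by (rule TP_eq[OF TP_add[OF TP_realpoly[OF r] TP_mult[OF TP_const[of \<i>] TP_realpoly[OF i]]]])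
       (simp add: complex_eq_iff)
qed



context circ begin

lemma TP_bdd: "TP P \<Longrightarrow> BM P"
proof (induction rule: TP.induct)
  case (TP_mono a k)
  then show ?case by (intro BM_mult BM_const BM_powi)
next
  case (TP_add P Q)
  show ?case by (rule BM_add[OF TP_add.IH])
next
  case (TP_cong P Q)
  then obtain B where "\<forall>z\<in>sphere 0 1. cmod (P z) \<le> B" by (auto simp: BM_def)
  with TP_cong show ?case unfolding BM_def by (auto intro!: exI[of _ B])
qed

lemma TP_Qc: "(\<And>k. Qc m c (\<lambda>z. z powi k)) \<Longrightarrow> TP P \<Longrightarrow> Qc m c P"
proof -
  assume mono: "\<And>k. Qc m c (\<lambda>z. z powi k)"
  show "TP P \<Longrightarrow> Qc m c P"
  proof (induction rule: TP.induct)
    case (TP_mono a k)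
    then show ?case using Qc_scale[OF mono] by blast
  next
    case (TP_add P Q)
    then show ?case by (intro Qc_add TP_bdd)
  next
    case (TP_cong P Q)
    show ?case by (rule Qc_cong[OF TP_meas[OF TP_cong.hyps(1)] TP_cong.hyps(3)]) (use TP_cong in auto)
  qed
qed

lemma Qc_cont:
  assumes mono: "\<And>k. Qc m c (\<lambda>z. z powi k)" and G: "continuous_on UNIV G"
  shows "Qc m c G"
proof -
  have "\<forall>j. \<exists>g. polynomial_function g \<and> (\<forall>z\<in>sphere 0 1. cmod (G z - g z) < inverse (real (Suc j)))"
    using Stone_Weierstrass_polynomial_function[OF compact_sphere continuous_on_subset[OF G]] by auto
  then obtain gs where gs: "\<And>j. polynomial_function (gs j)"
    and ga: "\<And>j z. z \<in> sphere 0 1 \<Longrightarrow> cmod (G z - gs j z) < inverse (real (Suc j))"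
    by metis
  have "compact (G ` sphere 0 1)"
    by (rule compact_continuous_image[OF continuous_on_subset[OF G] compact_sphere]) simp
  then have "bounded (G ` sphere 0 1)" by (rule compact_imp_bounded)
  then obtain BG where "\<forall>y\<in>G ` sphere 0 1. cmod y \<le> BG" unfolding bounded_iff by blast
  then have BG: "\<And>z. z \<in> sphere 0 1 \<Longrightarrow> cmod (G z) \<le> BG" by blast
  show ?thesis
  proof (rule Qc_lim[where Gj=gs and B="BG + 1"])
    show "G \<in> borel_measurable borel" using G by (rule borel_measurable_continuous_onI)
    show "BM (gs j)" for j by (rule TP_bdd[OF TP_poly[OF gs]])
    show "Qc m c (gs j)" for j by (rule TP_Qc[OF mono TP_poly[OF gs]])
    show "cmod (gs j z) \<le> BG + 1" if "z \<in> sphere 0 1" for j z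
    proof -
      have "cmod (gs j z) \<le> cmod (G z) + cmod (G z - gs j z)"
        using norm_triangle_ineq4[of "G z" "G z - gs j z"] by simp
      moreover have "inverse (real (Suc j)) \<le> 1" by (simp add: inverse_le_1_iff)
      ultimately show ?thesis using BG[OF that] ga[OF that, of j] by linarith
    qed
    show "(\<lambda>j. gs j z) \<longlonglongrightarrow> G z" if "z \<in> sphere 0 1" for z
    proof -
      have "(\<lambda>j. gs j z - G z) \<longlonglongrightarrow> 0"
      proof (rule Lim_null_comparison[OF _ LIMSEQ_inverse_real_of_nat])
        show "\<forall>\<^sub>F j in sequentially. norm (gs j z - G z) \<le> inverse (real (Suc j))"
          using ga[OF that] by (auto simp: norm_minus_commute less_imp_le)
      qed
      then show ?thesis by (simp add: LIM_zero_iff)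
    qed
  qed
qed

lemma BM_indicator: "A \<in> sets borel \<Longrightarrow> BM (indicator A :: complex \<Rightarrow> complex)"
  unfolding BM_def by (auto intro!: exI[of _ 1] simp: indicator_def)

lemma Qc_open:
  assumes mono: "\<And>k. Qc m c (\<lambda>z. z powi k)" and U: "open U"
  shows "Qc m c (indicator U :: complex \<Rightarrow> complex)"
proof (cases "U = UNIV")
  case True
  then have "(indicator U :: complex \<Rightarrow> complex) = (\<lambda>z. 1)" by auto
  then show ?thesis using TP_Qc[OF mono TP_const[of 1]] by simp
next
  case False
  define C where "C = UNIV - U"
  have C: "closed C" "C \<noteq> {}" using U False by (auto simp: C_def closed_Diff)
  define g where "g j z = complex_of_real (min 1 (real (Suc j) * infdist z C))" for j z
  have gc: "continuous_on UNIV (g j)" for j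
    unfolding g_def by (intro continuous_intros)
  show ?thesis
  proof (rule Qc_lim[where Gj=g and B=1])
    show "indicator U \<in> borel_measurable borel" using U by (intro borel_measurable_indicator) auto
    show "BM (g j)" for j
      unfolding BM_def using borel_measurable_continuous_onI[OF gc]
      by (auto intro!: exI[of _ 1] simp: g_def infdist_nonneg)
    show "Qc m c (g j)" for j by (rule Qc_cont[OF mono gc])
    show "cmod (g j z) \<le> 1" for j z by (auto simp: g_def infdist_nonneg)
    show "(\<lambda>j. g j z) \<longlonglongrightarrow> indicator U z" for z
    proof (cases "z \<in> U")
      case True
      then have d: "infdist z C > 0" using infdist_pos_not_in_closed[OF C] by (auto simp: C_def)
      obtain n where n: "1 < real n * infdist z C" using ex_less_of_nat_mult[OF d] by blast
      have "\<forall>\<^sub>F j in sequentially. g j z = 1"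
        unfolding eventually_sequentially
      proof (intro exI allI impI)
        fix j assume "n \<le> j"
        then have "real n * infdist z C \<le> real (Suc j) * infdist z C"
          using d by (intro mult_right_mono) auto
        then show "g j z = 1" using n by (auto simp: g_def)
      qed
      then show ?thesis using True by (simp add: tendsto_eventually)
    next
      case False
      then have "z \<in> C" by (simp add: C_def)
      then have "g j z = 0" for j by (simp add: g_def)
      then show ?thesis using False by simp
    qed
  qed
qed

lemma Qc_borel_set:
  assumes mono: "\<And>k. Qc m c (\<lambda>z. z powi k)" and A: "A \<in> sets borel"
  shows "Qc m c (indicator A :: complex \<Rightarrow> complex)"
proof -
  define D where "D = {A. A \<in> sets borel \<and> Qc m c (indicator A :: complex \<Rightarrow> complex)}"
  have Q1: "Qc m c (\<lambda>z. 1)" using TP_Qc[OF mono TP_const[of 1]] .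
  have dyn: "Dynkin_system UNIV D"
  proof (rule Dynkin_systemI)
    show "UNIV \<in> D" unfolding D_def using Q1 by simp
    show "UNIV - A \<in> D" if "A \<in> D" for A
    proof -
      have A: "A \<in> sets borel" "Qc m c (indicator A)" using that D_def by auto
      have "Qc m c (\<lambda>z. 1 + (-1) * indicator A z)"
        by (intro Qc_add Qc_scale BM_const BM_mult BM_indicator A Q1)
      moreover have "(\<lambda>z. 1 + (-1) * indicator A z) = (indicator (UNIV - A) :: complex \<Rightarrow> complex)"
        by (auto simp: indicator_def)
      ultimately show ?thesis using A unfolding D_def by auto
    qed
    show "(\<Union>i. A i) \<in> D" if dj: "disjoint_family A" and r: "range A \<subseteq> D" for A :: "nat \<Rightarrow> complex set"
    proof -
      have Ai: "A i \<in> sets borel" "Qc m c (indicator (A i))" for i using r D_def by auto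
      have Ub: "(\<Union>i. A i) \<in> sets borel" using Ai by auto
      have sq: "BM (\<lambda>z. \<Sum>i\<in>{..<j}. indicator (A i) z) \<and> Qc m c (\<lambda>z. \<Sum>i\<in>{..<j}. indicator (A i) z)" for j
        by (rule Qc_sum) (auto intro: BM_indicator Ai)
      have "Qc m c (indicator (\<Union>i. A i))"
      proof (rule Qc_lim[where Gj="\<lambda>j z. \<Sum>i\<in>{..<j}. indicator (A i) z" and B=1])
        show "indicator (\<Union>i. A i) \<in> borel_measurable borel" using Ub by simp
        show "BM (\<lambda>z. \<Sum>i\<in>{..<j}. indicator (A i) z)" for j using sq by blast
        show "Qc m c (\<lambda>z. \<Sum>i\<in>{..<j}. indicator (A i) z)" for j using sq by blast
        show "cmod (\<Sum>i\<in>{..<j}. indicator (A i) z :: complex) \<le> 1" for j z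
        proof -
          have dfo: "disjoint_family_on A {..<j}" using dj unfolding disjoint_family_on_def by auto
          have "indicator (\<Union>(A ` {..<j})) z = (\<Sum>i\<in>{..<j}. indicator (A i) z :: complex)"
            by (rule indicator_UN_disjoint[OF finite_lessThan dfo])
          then have "(\<Sum>i\<in>{..<j}. indicator (A i) z :: complex) = indicator (\<Union>(A ` {..<j})) z" by simp
          then show ?thesis by (simp add: indicator_def)
        qed
        show "(\<lambda>j. \<Sum>i\<in>{..<j}. indicator (A i) z :: complex) \<longlonglongrightarrow> indicator (\<Union>i. A i) z" for z
        proof -
          have "(\<lambda>i. indicator (A i) z :: real) sums indicator (\<Union>i. A i) z"
            by (rule indicator_sums) (use dj in \<open>auto simp: disjoint_family_on_def\<close>)
          then have "(\<lambda>i. complex_of_real (indicator (A i) z)) sums complex_of_real (indicator (\<Union>i. A i) z)"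
            by (rule sums_of_real)
          moreover have "\<And>B. complex_of_real (indicator B z) = indicator B z" by (simp add: indicator_def)
          ultimately show ?thesis by (simp add: sums_def)
        qed
      qed
      then show ?thesis using Ub D_def by auto
    qed
  qed (auto simp: D_def)
  have "sigma_sets UNIV {S. open S} = D"
  proof (rule Dynkin_system.Dynkin_lemma[OF dyn])
    show "Int_stable {S. open S}" by (auto simp: Int_stable_def)
    show "{S. open S} \<subseteq> D" unfolding D_def using Qc_open[OF mono] by auto
    show "D \<subseteq> sigma_sets UNIV {S. open S}" unfolding D_def using sets_borel by auto
  qed
  then show ?thesis using A sets_borel D_def by auto
qed

lemma Qc_bounded:
  assumes mono: "\<And>k. Qc m c (\<lambda>z. z powi k)" and Hm: "H \<in> borel_measurable borel"
    and Hb: "\<And>z. 0 \<le> H z \<and> H z \<le> 1"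
  shows "Qc m c (\<lambda>z. complex_of_real (H z))"
proof -
  note [measurable] = Hm
  define g where "g j z = complex_of_real (real_of_int \<lfloor>real (Suc j) * H z\<rfloor> / real (Suc j))" for j z
  have gm[measurable]: "g j \<in> borel_measurable borel" for j unfolding g_def by measurable
  have fl: "0 \<le> \<lfloor>real (Suc j) * H z\<rfloor> \<and> \<lfloor>real (Suc j) * H z\<rfloor> \<le> int (Suc j)" for j z
  proof -
    have "0 \<le> real (Suc j) * H z" "real (Suc j) * H z \<le> real (Suc j)" using Hb[of z] by auto
    then show ?thesis by (metis floor_mono floor_of_nat floor_zero of_int_of_nat_eq)
  qed
  have geq: "g j z = (\<Sum>i\<in>{..Suc j}. (of_nat i / of_nat (Suc j)) *
      indicator {z. \<lfloor>real (Suc j) * H z\<rfloor> = int i} z)" for j z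
  proof -
    define i0 where "i0 = nat \<lfloor>real (Suc j) * H z\<rfloor>"
    have i0: "\<lfloor>real (Suc j) * H z\<rfloor> = int i0" "i0 \<in> {..Suc j}" using fl[of j z] by (auto simp: i0_def)
    have "(\<Sum>i\<in>{..Suc j}. (of_nat i / of_nat (Suc j)) * indicator {z. \<lfloor>real (Suc j) * H z\<rfloor> = int i} z)
       = (\<Sum>i\<in>{..Suc j}. if i = i0 then of_nat i / of_nat (Suc j) else (0::complex))"
      by (rule sum.cong) (use i0 in \<open>auto simp: indicator_def\<close>)
    also have "\<dots> = of_nat i0 / of_nat (Suc j)" by (simp only: sum.delta finite_atMost i0(2) if_True)
    finally have S: "(\<Sum>i\<in>{..Suc j}. (of_nat i / of_nat (Suc j)) * indicator {z. \<lfloor>real (Suc j) * H z\<rfloor> = int i} z)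
       = (of_nat i0 / of_nat (Suc j) :: complex)" .
    have G: "g j z = of_nat i0 / of_nat (Suc j)" unfolding g_def i0(1) by simp
    show ?thesis by (simp only: S G)
  qed
  show ?thesis
  proof (rule Qc_lim[where Gj=g and B=1])
    show "(\<lambda>z. complex_of_real (H z)) \<in> borel_measurable borel" using Hm by measurable
    have sq: "BM (\<lambda>z. \<Sum>i\<in>{..Suc j}. (of_nat i / of_nat (Suc j)) * indicator {z. \<lfloor>real (Suc j) * H z\<rfloor> = int i} z)
      \<and> Qc m c (\<lambda>z. \<Sum>i\<in>{..Suc j}. (of_nat i / of_nat (Suc j)) * indicator {z. \<lfloor>real (Suc j) * H z\<rfloor> = int i} z)" for j
    proof (rule Qc_sum)
      fix i
      have ms: "{z. \<lfloor>real (Suc j) * H z\<rfloor> = int i} \<in> sets borel" using Hm by measurable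
      show "BM (\<lambda>z. of_nat i / of_nat (Suc j) * indicator {z. \<lfloor>real (Suc j) * H z\<rfloor> = int i} z) \<and>
        Qc m c (\<lambda>z. of_nat i / of_nat (Suc j) * indicator {z. \<lfloor>real (Suc j) * H z\<rfloor> = int i} z)"
        using ms by (intro conjI BM_mult BM_const BM_indicator Qc_scale Qc_borel_set[OF mono])
    qed simp
    have gfun: "g j = (\<lambda>z. \<Sum>i\<in>{..Suc j}. (of_nat i / of_nat (Suc j)) * indicator {z. \<lfloor>real (Suc j) * H z\<rfloor> = int i} z)" for j
      using geq by auto
    show "BM (g j)" for j using sq[of j] gfun[of j] by simp
    show "Qc m c (g j)" for j using sq[of j] gfun[of j] by simp
    have gb: "0 \<le> real_of_int \<lfloor>real (Suc j) * H z\<rfloor> / real (Suc j) \<and>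
       real_of_int \<lfloor>real (Suc j) * H z\<rfloor> / real (Suc j) \<le> H z \<and>
       H z - 1 / real (Suc j) \<le> real_of_int \<lfloor>real (Suc j) * H z\<rfloor> / real (Suc j)" for j z
    proof -
      have a: "real_of_int \<lfloor>real (Suc j) * H z\<rfloor> \<le> real (Suc j) * H z" by (rule of_int_floor_le)
      have b: "real (Suc j) * H z - 1 < real_of_int \<lfloor>real (Suc j) * H z\<rfloor>" by linarith
      have c: "0 \<le> real_of_int \<lfloor>real (Suc j) * H z\<rfloor>" using fl[of j z] by simp
      have K: "real (Suc j) > 0" by simp
      have p1: "0 \<le> real_of_int \<lfloor>real (Suc j) * H z\<rfloor> / real (Suc j)" using c by simp
      have "real_of_int \<lfloor>real (Suc j) * H z\<rfloor> / real (Suc j) \<le> real (Suc j) * H z / real (Suc j)"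
        using a K by (intro divide_right_mono) auto
      then have p2: "real_of_int \<lfloor>real (Suc j) * H z\<rfloor> / real (Suc j) \<le> H z" using K by simp
      have "H z - 1 / real (Suc j) = (real (Suc j) * H z - 1) / real (Suc j)" using K by (simp add: field_simps)
      also have "\<dots> \<le> real_of_int \<lfloor>real (Suc j) * H z\<rfloor> / real (Suc j)"
        using b K by (intro divide_right_mono) auto
      finally show ?thesis using p1 p2 by simp
    qed
    show "cmod (g j z) \<le> 1" for j z unfolding g_def norm_of_real using gb[of j z] Hb[of z] by linarith
    show "(\<lambda>j. g j z) \<longlonglongrightarrow> complex_of_real (H z)" for z
    proof -
      have "(\<lambda>j. g j z - complex_of_real (H z)) \<longlonglongrightarrow> 0"
      proof (rule Lim_null_comparison[OF _ LIMSEQ_inverse_real_of_nat])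
        show "\<forall>\<^sub>F j in sequentially. norm (g j z - complex_of_real (H z)) \<le> inverse (real (Suc j))"
        proof (intro always_eventually allI)
          fix j
          have "g j z - complex_of_real (H z) = complex_of_real (real_of_int \<lfloor>real (Suc j) * H z\<rfloor> / real (Suc j) - H z)"
            by (simp add: g_def)
          then have "norm (g j z - complex_of_real (H z)) = \<bar>real_of_int \<lfloor>real (Suc j) * H z\<rfloor> / real (Suc j) - H z\<bar>"
            by (simp only: norm_of_real)
          moreover have "\<bar>real_of_int \<lfloor>real (Suc j) * H z\<rfloor> / real (Suc j) - H z\<bar> \<le> 1 / real (Suc j)"
            using gb[of j z] by (simp only: abs_le_iff) linarith
          ultimately show "norm (g j z - complex_of_real (H z)) \<le> inverse (real (Suc j))"
            by (simp add: inverse_eq_divide)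
        qed
      qed
      then show ?thesis by (simp add: LIM_zero_iff)
    qed
  qed
qed

end

lemma neg1_mod2: "(-1::real) ^ (a mod 2) = (-1) ^ a"
  by (simp add: minus_one_power_iff)

locale erg =
  fixes M :: "'a::topological_space measure" and S :: "'a \<Rightarrow> 'a" and \<phi> :: "'a \<Rightarrow> nat"
  assumes prob: "prob_space M" and spM: "space M = UNIV" and setsM: "sets M = sets borel"
    and mp: "mp_automorphism M S"
    and phim: "\<phi> \<in> borel_measurable M" and phi01: "\<And>y. \<phi> y \<in> {0, 1}"
begin

sublocale prob_space M by (rule prob)

abbreviation "T \<equiv> inv S"

lemma bijS: "bij S" using mp mp_automorphism_def by auto
lemma TS[simp]: "T (S y) = y" using bijS by (simp add: bij_is_inj)
lemma ST[simp]: "S (T y) = y" using bijS by (simp add: bij_is_surj surj_f_inv_f)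
lemma Sm[measurable]: "S \<in> M \<rightarrow>\<^sub>M M" using mp mp_automorphism_def by auto
lemma Tm[measurable]: "T \<in> M \<rightarrow>\<^sub>M M" using mp mp_automorphism_def by auto
lemma dS: "distr M M S = M" using mp mp_automorphism_def by auto
lemma dT: "distr M M T = M" using mp mp_automorphism_def by auto
declare phim[measurable]
lemma phim_c[measurable]: "\<phi> \<in> M \<rightarrow>\<^sub>M count_space UNIV"
  by (rule measurable_count_space_eq2_countable[THEN iffD2]) (auto intro: measurable_sets[OF phim])


lemma Spow_m[measurable]: "(S ^^ k) \<in> M \<rightarrow>\<^sub>M M" by (rule measurable_compose_n[OF Sm])
lemma Tpow_m[measurable]: "(T ^^ k) \<in> M \<rightarrow>\<^sub>M M" by (rule measurable_compose_n[OF Tm])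

lemma distr_pow:
  assumes P: "P \<in> M \<rightarrow>\<^sub>M M" and d: "distr M M P = M"
  shows "distr M M (P ^^ k) = M"
proof (induction k)
  case 0
  then show ?case by (simp add: distr_id2 spM)
next
  case (Suc k)
  have "distr M M (P ^^ Suc k) = distr M M ((P ^^ k) \<circ> P)" by (simp only: funpow_Suc_right)
  also have "\<dots> = distr (distr M M P) M (P ^^ k)"
    by (rule distr_distr[symmetric]) (auto intro: measurable_compose_n P)
  also have "\<dots> = M" using d Suc by simp
  finally show ?case .
qed

lemma dSk: "distr M M (S ^^ k) = M" by (rule distr_pow[OF Sm dS])
lemma dTk: "distr M M (T ^^ k) = M" by (rule distr_pow[OF Tm dT])

lemma int_pres:
  fixes u :: "'a \<Rightarrow> 'b::{banach,second_countable_topology}"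
  assumes P: "P \<in> M \<rightarrow>\<^sub>M M" and d: "distr M M P = M" and u: "u \<in> borel_measurable M"
  shows "(\<integral>y. u (P y) \<partial>M) = (\<integral>y. u y \<partial>M)"
proof -
  have "(\<integral>y. u y \<partial>M) = (\<integral>y. u y \<partial>distr M M P)" using d by simp
  also have "\<dots> = (\<integral>y. u (P y) \<partial>M)" by (rule integral_distr[OF P u])
  finally show ?thesis by simp
qed

lemma meas_pres:
  assumes P: "P \<in> M \<rightarrow>\<^sub>M M" and d: "distr M M P = M" and A: "A \<in> sets M"
  shows "measure M (P -` A) = measure M A"
proof -
  have "measure M A = measure (distr M M P) A" using d by simp
  also have "\<dots> = measure M (P -` A \<inter> space M)" by (rule measure_distr[OF P A])
  finally show ?thesis by (simp add: spM)
qed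

lemma AE_pres:
  assumes P: "P \<in> M \<rightarrow>\<^sub>M M" and d: "distr M M P = M" and Q: "Measurable.pred M Q"
    and ae: "AE y in M. Q y"
  shows "AE y in M. Q (P y)"
proof -
  have "AE y in distr M M P. Q y" by (subst d) (rule ae)
  then show ?thesis using AE_distr_iff[OF P Q[unfolded pred_def]] by simp
qed

definition eps :: "'a \<Rightarrow> real" where "eps y = (-1) ^ \<phi> y"
definition F :: "int \<Rightarrow> 'a \<Rightarrow> real" where "F m y = (-1) ^ cocycle S \<phi> m y"

lemma eps_sq: "eps y * eps y = 1" by (simp add: eps_def flip: power_add)
lemma eps_pm: "eps y = 1 \<or> eps y = -1" using phi01[of y] by (auto simp: eps_def)
lemma eps_m[measurable]: "eps \<in> borel_measurable M" unfolding eps_def by measurable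

definition PF :: "nat \<Rightarrow> 'a \<Rightarrow> real" where "PF n y = (-1) ^ (\<Sum>k<n. \<phi> ((S ^^ k) y))"
definition NF :: "nat \<Rightarrow> 'a \<Rightarrow> real" where "NF p y = (-1) ^ (\<Sum>k\<in>{1..p}. \<phi> ((T ^^ k) y))"

lemma F_pos: "F (int n) y = PF n y" by (simp add: F_def PF_def cocycle_def neg1_mod2)
lemma F_neg: "F (- int p) y = NF p y"
proof (cases "p = 0")
  case True
  then show ?thesis by (simp add: F_def NF_def cocycle_def)
next
  case False
  then have "\<not> 0 \<le> - int p" by simp
  then show ?thesis by (simp add: F_def NF_def cocycle_def neg1_mod2)
qed

lemma F_m[measurable]: "F m \<in> borel_measurable M"
proof (cases "m \<ge> 0")
  case True
  then obtain n where "m = int n" by (metis nonneg_eq_int)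
  then have "F m = PF n" using F_pos by auto
  moreover have "PF n = (\<lambda>y. \<Prod>k<n. eps ((S ^^ k) y))"
    unfolding PF_def eps_def by (simp add: power_sum)
  ultimately show ?thesis by simp
next
  case False
  then obtain p where "m = - int p" by (metis neg_int_cases linorder_not_le less_imp_le)
  then have "F m = NF p" using F_neg by auto
  moreover have "NF p = (\<lambda>y. \<Prod>k\<in>{1..p}. eps ((T ^^ k) y))"
    unfolding NF_def eps_def by (simp add: power_sum)
  ultimately show ?thesis by simp
qed

lemma F_pm: "\<bar>F m y\<bar> = 1" by (simp add: F_def)

definition Spow :: "int \<Rightarrow> 'a \<Rightarrow> 'a" where
  "Spow m = (if 0 \<le> m then S ^^ nat m else T ^^ nat (- m))"

lemma Tpow_S: "(T ^^ Suc k) (S y) = (T ^^ k) y"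
  by (simp only: funpow_Suc_right comp_apply TS)

lemma Spow_S: "(S ^^ Suc k) y = (S ^^ k) (S y)"
  by (simp only: funpow_Suc_right comp_apply)

lemma PF_Suc1: "PF (Suc n) y = eps y * PF n (S y)"
proof -
  have "(\<Sum>k<Suc n. \<phi> ((S^^k) y)) = \<phi> y + (\<Sum>k<n. \<phi> ((S^^k) (S y)))"
    by (simp only: sum.lessThan_Suc_shift Spow_S funpow_0)
  then show ?thesis unfolding PF_def eps_def by (simp only: power_add)
qed

lemma PF_Suc2: "PF (Suc n) y = PF n y * eps ((S ^^ n) y)"
  unfolding PF_def eps_def by (simp add: power_add)

lemma NF_Suc1: "NF p y = eps y * NF (Suc p) (S y)"
proof -
  have "(\<Sum>k\<in>{1..Suc p}. \<phi> ((T ^^ k) (S y))) = (\<Sum>k<Suc p. \<phi> ((T ^^ Suc k) (S y)))"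
    by (simp only: One_nat_def sum.atLeast1_atMost_eq)
  also have "\<dots> = (\<Sum>k<Suc p. \<phi> ((T ^^ k) y))" by (simp only: Tpow_S)
  also have "\<dots> = \<phi> y + (\<Sum>k<p. \<phi> ((T ^^ Suc k) y))" by (simp only: sum.lessThan_Suc_shift funpow_0)
  also have "(\<Sum>k<p. \<phi> ((T ^^ Suc k) y)) = (\<Sum>k\<in>{1..p}. \<phi> ((T ^^ k) y))"
    by (simp only: One_nat_def sum.atLeast1_atMost_eq)
  finally have e: "(\<Sum>k\<in>{1..Suc p}. \<phi> ((T ^^ k) (S y))) = \<phi> y + (\<Sum>k\<in>{1..p}. \<phi> ((T ^^ k) y))" .
  have "NF (Suc p) (S y) = eps y * NF p y" unfolding NF_def eps_def by (simp only: e power_add)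
  then show ?thesis by (simp add: mult.assoc[symmetric] eps_sq)
qed

lemma NF_Suc2: "NF p y = NF (Suc p) y * eps ((T ^^ Suc p) y)"
proof -
  have e: "(\<Sum>k\<in>{1..Suc p}. \<phi> ((T ^^ k) y)) = (\<Sum>k\<in>{1..p}. \<phi> ((T ^^ k) y)) + \<phi> ((T ^^ Suc p) y)"
    by (rule sum.cl_ivl_Suc[THEN trans]) simp
  have "NF (Suc p) y = NF p y * eps ((T ^^ Suc p) y)" unfolding NF_def eps_def by (simp only: e power_add)
  then show ?thesis by (simp add: mult.assoc eps_sq)
qed

lemma C1: "F (j + 1) y = eps y * F j (S y)"
proof (cases "j \<ge> 0")
  case True
  define n where "n = nat j"
  have n: "j = int n" using True by (simp add: n_def)
  have e: "j + 1 = int (Suc n)" by (simp add: n)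
  have "F (j + 1) y = F (int (Suc n)) y" by (simp only: e)
  also have "\<dots> = eps y * F j (S y)" by (simp only: F_pos PF_Suc1 n)
  finally show ?thesis .
next
  case False
  define p where "p = nat (- j - 1)"
  have p: "j = - int (Suc p)" using False by (simp add: p_def)
  have "F (j + 1) y = F (- int p) y" by (simp add: p)
  also have "\<dots> = eps y * F j (S y)" by (simp only: F_neg p) (rule NF_Suc1)
  finally show ?thesis .
qed

lemma C2: "F (m + 1) y = F m y * eps (Spow m y)"
proof (cases "m \<ge> 0")
  case True
  define n where "n = nat m"
  have n: "m = int n" using True by (simp add: n_def)
  have sp: "Spow (int n) = S ^^ n" by (simp add: Spow_def)
  have e: "m + 1 = int (Suc n)" by (simp add: n)
  have "F (m + 1) y = F (int (Suc n)) y" by (simp only: e)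
  also have "\<dots> = F m y * eps (Spow m y)" by (simp only: F_pos PF_Suc2 n sp)
  finally show ?thesis .
next
  case False
  define p where "p = nat (- m - 1)"
  have p: "m = - int (Suc p)" using False by (simp add: p_def)
  have np: "nat (int (Suc p)) = Suc p" by (rule nat_int)
  have sp: "Spow (- int (Suc p)) = T ^^ Suc p" unfolding Spow_def by (simp only: np minus_minus if_False) simp
  have "F (m + 1) y = F (- int p) y" by (simp add: p)
  also have "\<dots> = F m y * eps (Spow m y)" by (simp only: F_neg p sp) (rule NF_Suc2)
  finally show ?thesis .
qed

end

context erg begin

definition Dset :: "('a \<Rightarrow> 'a) \<Rightarrow> 'a set" where
  "Dset P = {y \<in> space M. eps (P y) \<noteq> eps y}"

lemma Dset_m: assumes [measurable]: "P \<in> M \<rightarrow>\<^sub>M M" shows "Dset P \<in> sets M"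
  unfolding Dset_def by measurable

lemma eps_prod: "eps (P y) * eps y = 1 - 2 * indicator (Dset P) y"
  using eps_pm[of "P y"] eps_pm[of y] by (auto simp: Dset_def indicator_def spM)

lemma int_eps_prod: "P \<in> M \<rightarrow>\<^sub>M M \<Longrightarrow> (\<integral>y. eps (P y) * eps y \<partial>M) = 1 - 2 * prob (Dset P)"
proof -
  assume P: "P \<in> M \<rightarrow>\<^sub>M M"
  have "(\<integral>y. eps (P y) * eps y \<partial>M) = (\<integral>y. 1 - 2 * indicator (Dset P) y \<partial>M)"
    by (simp only: eps_prod)
  also have "\<dots> = (\<integral>y. 1 \<partial>M) - (\<integral>y. 2 * indicator (Dset P) y \<partial>M)"
    by (rule Bochner_Integration.integral_diff) (use Dset_m[OF P] in \<open>auto intro!: integrable_real_indicator simp: less_top[symmetric]\<close>)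
  also have "\<dots> = 1 - 2 * prob (Dset P)"
    using Dset_m[OF P] prob_space spM by simp
  finally show ?thesis .
qed

lemma rig_D:
  assumes rig: "weakly_rigid M S q"
  shows "(\<lambda>n. prob (Dset (S ^^ q n))) \<longlonglongrightarrow> 0"
proof -
  define f where "f y = complex_of_real (eps y)" for y
  have fm: "f \<in> borel_measurable M" unfolding f_def by measurable
  have "(\<lambda>y. (cmod (f y))\<^sup>2) = (\<lambda>y. 1)"
    by (auto simp: f_def fun_eq_iff power2_eq_square eps_sq)
  then have fL2: "L2fun M f" unfolding L2fun_def using fm by simp
  have "(\<lambda>n. \<integral>y. f ((S ^^ q n) y) * cnj (f y) \<partial>M) \<longlonglongrightarrow> (\<integral>y. f y * cnj (f y) \<partial>M)"
    using rig fL2 unfolding weakly_rigid_def by blast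
  moreover have "(\<integral>y. f (P y) * cnj (f y) \<partial>M) = complex_of_real (\<integral>y. eps (P y) * eps y \<partial>M)" for P
    unfolding f_def by (simp flip: of_real_mult)
  moreover have "(\<integral>y. f y * cnj (f y) \<partial>M) = 1"
  proof -
    have pU: "prob UNIV = 1" using prob_space spM by simp
    show ?thesis unfolding f_def by (simp flip: of_real_mult add: eps_sq pU prob_space)
  qed
  ultimately have "(\<lambda>n. complex_of_real (\<integral>y. eps ((S ^^ q n) y) * eps y \<partial>M)) \<longlonglongrightarrow> complex_of_real 1"
    by simp
  then have "(\<lambda>n. \<integral>y. eps ((S ^^ q n) y) * eps y \<partial>M) \<longlonglongrightarrow> 1"
    by (simp only: tendsto_of_real_iff)
  then have "(\<lambda>n. 1 - 2 * prob (Dset (S ^^ q n))) \<longlonglongrightarrow> 1"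
    by (simp only: int_eps_prod[OF Spow_m])
  then have "(\<lambda>n. (1 - (1 - 2 * prob (Dset (S ^^ q n)))) / 2) \<longlonglongrightarrow> (1 - 1) / 2"
    by (intro tendsto_intros) auto
  then show ?thesis by simp
qed

lemma D_chain: "Dset (S ^^ (a * k)) \<subseteq> (\<Union>i\<in>{..<k}. (S ^^ (a * i)) -` Dset (S ^^ a))"
proof (induction k)
  case 0
  then show ?case by (simp add: Dset_def)
next
  case (Suc k)
  show ?case
  proof
    fix y assume y: "y \<in> Dset (S ^^ (a * Suc k))"
    show "y \<in> (\<Union>i\<in>{..<Suc k}. (S ^^ (a * i)) -` Dset (S ^^ a))"
    proof (cases "eps ((S ^^ (a * k)) y) = eps y")
      case True
      have "(S ^^ (a * Suc k)) y = (S ^^ a) ((S ^^ (a * k)) y)"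
        by (simp only: mult_Suc_right funpow_add comp_apply)
      then have "(S ^^ (a * k)) y \<in> Dset (S ^^ a)" using y True by (auto simp: Dset_def spM)
      then show ?thesis by auto
    next
      case False
      then have "y \<in> Dset (S ^^ (a * k))" by (simp add: Dset_def spM)
      then obtain i where "i < k" "(S ^^ (a * i)) y \<in> Dset (S ^^ a)" using Suc.IH by blast
      then show ?thesis by auto
    qed
  qed
qed

lemma D_chain_meas: "prob (Dset (S ^^ (a * k))) \<le> real k * prob (Dset (S ^^ a))"
proof -
  have "prob (Dset (S ^^ (a * k))) \<le> prob (\<Union>i\<in>{..<k}. (S ^^ (a * i)) -` Dset (S ^^ a))"
  proof (rule finite_measure_mono[OF D_chain])
    show "(\<Union>i\<in>{..<k}. (S ^^ (a * i)) -` Dset (S ^^ a)) \<in> sets M"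
      using Dset_m[OF Spow_m] measurable_sets[OF Spow_m] spM by auto
  qed
  also have "\<dots> \<le> (\<Sum>i\<in>{..<k}. prob ((S ^^ (a * i)) -` Dset (S ^^ a)))"
    by (rule finite_measure_subadditive_finite)
       (use Dset_m[OF Spow_m] measurable_sets[OF Spow_m] spM in auto)
  also have "\<dots> = (\<Sum>i\<in>{..<k}. prob (Dset (S ^^ a)))"
    by (intro sum.cong refl meas_pres[OF Spow_m dSk] Dset_m[OF Spow_m])
  finally show ?thesis by simp
qed

lemma ST_pow: "(S ^^ b) ((T ^^ b) y) = y"
proof (induction b arbitrary: y)
  case 0
  then show ?case by simp
next
  case (Suc b)
  have a: "S ^^ Suc b = S ^^ b \<circ> S" by (rule funpow_Suc_right)
  have b: "T ^^ Suc b = T \<circ> T ^^ b" by simp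
  have "(S ^^ Suc b) ((T ^^ Suc b) y) = (S ^^ b) (S (T ((T ^^ b) y)))"
    by (simp only: a b comp_apply)
  then show ?case using Suc by simp
qed

lemma D_inv: "Dset (T ^^ b) = (T ^^ b) -` Dset (S ^^ b)"
  by (auto simp: Dset_def spM ST_pow)

lemma D_inv_meas: "prob (Dset (T ^^ b)) = prob (Dset (S ^^ b))"
  unfolding D_inv by (rule meas_pres[OF Tpow_m dTk Dset_m[OF Spow_m]])

lemma D_mn:
  assumes rig: "weakly_rigid M S q"
  shows "(\<lambda>n. prob (Dset (Spow (j * int (q n))))) \<longlonglongrightarrow> 0"
proof -
  have bnd: "prob (Dset (Spow (j * int (q n)))) \<le> real (nat \<bar>j\<bar>) * prob (Dset (S ^^ q n))" for n
  proof (cases "j \<ge> 0")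
    case True
    then have "Spow (j * int (q n)) = S ^^ (q n * nat j)"
      by (simp add: Spow_def nat_mult_distrib mult.commute)
    then show ?thesis using D_chain_meas[of "q n" "nat j"] True by simp
  next
    case False
    have e1: "- (j * int (q n)) = (- j) * int (q n)" by simp
    have "nat ((- j) * int (q n)) = nat (- j) * nat (int (q n))" by (rule nat_mult_distrib) (use False in simp)
    then have e2: "nat ((- j) * int (q n)) = nat (- j) * q n" by (simp only: nat_int)
    have "Spow (j * int (q n)) = T ^^ (q n * nat (- j))"
    proof (cases "q n = 0")
      case True
      then show ?thesis by (simp add: Spow_def)
    next
      case False
      then have "\<not> 0 \<le> j * int (q n)" using \<open>\<not> 0 \<le> j\<close> by (simp add: zero_le_mult_iff)
      then show ?thesis unfolding Spow_def by (simp only: if_False e1 e2 mult.commute)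
    qed
    then show ?thesis using D_chain_meas[of "q n" "nat (-j)"] False D_inv_meas by simp
  qed
  have "(\<lambda>n. real (nat \<bar>j\<bar>) * prob (Dset (S ^^ q n))) \<longlonglongrightarrow> real (nat \<bar>j\<bar>) * 0"
    by (intro tendsto_intros rig_D[OF rig])
  then have h0: "(\<lambda>n. real (nat \<bar>j\<bar>) * prob (Dset (S ^^ q n))) \<longlonglongrightarrow> 0" by simp
  show ?thesis
  proof (rule tendsto_sandwich[where f="\<lambda>n. 0" and h="\<lambda>n. real (nat \<bar>j\<bar>) * prob (Dset (S ^^ q n))"])
    show "\<forall>\<^sub>F n in sequentially. 0 \<le> prob (Dset (Spow (j * int (q n))))" by simp
    show "\<forall>\<^sub>F n in sequentially. prob (Dset (Spow (j * int (q n)))) \<le> real (nat \<bar>j\<bar>) * prob (Dset (S ^^ q n))"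
      using bnd by simp
  qed (use h0 in auto)
qed

lemma F_shift: "F m (S y) \<noteq> F m y \<Longrightarrow> y \<in> Dset (Spow m)"
proof (rule ccontr)
  assume ne: "F m (S y) \<noteq> F m y" and nd: "y \<notin> Dset (Spow m)"
  then have e: "eps (Spow m y) = eps y" by (simp add: Dset_def spM)
  have "eps y * F m (S y) = F m y * eps (Spow m y)" using C1[of m y] C2[of m y] by simp
  then have "eps y * F m (S y) = eps y * F m y" using e by simp
  moreover have "eps y \<noteq> 0" using eps_pm[of y] by auto
  ultimately show False using ne by simp
qed

lemma F_shift_bound: "\<bar>F m (S y) - F m y\<bar> \<le> 2 * indicator (Dset (Spow m)) y"
proof (cases "F m (S y) = F m y")
  case True
  then show ?thesis by simp
next
  case False
  then have "y \<in> Dset (Spow m)" by (rule F_shift)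
  moreover have "\<bar>F m (S y) - F m y\<bar> \<le> 2" using F_pm[of m "S y"] F_pm[of m y] by linarith
  ultimately show ?thesis by simp
qed

lemma Spow_m_int[measurable]: "Spow m \<in> M \<rightarrow>\<^sub>M M"
  by (simp add: Spow_def)

lemma L2_int: "L2fun M e \<Longrightarrow> integrable M (\<lambda>y. cmod (e y))"
proof -
  assume e: "L2fun M e"
  then have m: "e \<in> borel_measurable M" and i2: "integrable M (\<lambda>y. (cmod (e y))\<^sup>2)" by (auto simp: L2fun_def)
  show ?thesis
  proof (rule Bochner_Integration.integrable_bound[of _ "\<lambda>y. 1 + (cmod (e y))\<^sup>2"])
    show "integrable M (\<lambda>y. 1 + (cmod (e y))\<^sup>2)" using i2 by simp
    show "(\<lambda>y. cmod (e y)) \<in> borel_measurable M" using m by measurable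
    show "AE y in M. norm (cmod (e y)) \<le> norm (1 + (cmod (e y))\<^sup>2)"
    proof (intro always_eventually allI)
      fix y
      have "cmod (e y) \<le> 1 + (cmod (e y))\<^sup>2"
      proof (cases "cmod (e y) \<le> 1")
        case True
        then show ?thesis by (smt (verit) zero_le_power2)
      next
        case False
        then have "cmod (e y) * 1 \<le> cmod (e y) * cmod (e y)" by (intro mult_left_mono) auto
        then show ?thesis by (simp add: power2_eq_square)
      qed
      then show "norm (cmod (e y)) \<le> norm (1 + (cmod (e y))\<^sup>2)" by simp
    qed
  qed
qed

lemma UI:
  assumes e: "L2fun M e" and D: "\<And>n. D n \<in> sets M" and D0: "(\<lambda>n. prob (D n)) \<longlonglongrightarrow> 0"
  shows "(\<lambda>n. \<integral>y. indicator (D n) y * cmod (e y) \<partial>M) \<longlonglongrightarrow> 0"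
proof -
  have m: "e \<in> borel_measurable M" and i2: "integrable M (\<lambda>y. (cmod (e y))\<^sup>2)" using e by (auto simp: L2fun_def)
  define E2 where "E2 = (\<integral>y. (cmod (e y))\<^sup>2 \<partial>M)"
  have E2: "0 \<le> E2" unfolding E2_def by simp
  have int1: "integrable M (\<lambda>y. indicator (D n) y * cmod (e y))" for n
  proof (rule Bochner_Integration.integrable_bound[OF L2_int[OF e]])
    show "(\<lambda>y. indicator (D n) y * cmod (e y)) \<in> borel_measurable M" using m D by measurable
  qed (auto simp: indicator_def)
  have bound: "(\<integral>y. indicator (D n) y * cmod (e y) \<partial>M) \<le> K * prob (D n) + E2 / K" if K: "K > 0" for K n
  proof -
    have pw: "indicator (D n) y * cmod (e y) \<le> K * indicator (D n) y + (cmod (e y))\<^sup>2 / K" for y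
    proof (cases "y \<in> D n")
      case True
      show ?thesis
      proof (cases "cmod (e y) \<le> K")
        case True
        moreover have "0 \<le> (cmod (e y))\<^sup>2 / K" using K by simp
        moreover have "indicator (D n) y * cmod (e y) = cmod (e y)" "K * indicator (D n) y = K"
          using \<open>y \<in> D n\<close> by (simp_all add: indicator_def)
        ultimately show ?thesis by linarith
      next
        case False
        then have "cmod (e y) * K \<le> (cmod (e y))\<^sup>2" by (simp add: power2_eq_square mult_left_mono)
        then have "cmod (e y) \<le> (cmod (e y))\<^sup>2 / K" using K by (simp add: field_simps)
        then show ?thesis using \<open>y \<in> D n\<close> K by (simp add: indicator_def)
      qed
    next
      case False
      then show ?thesis using K by (simp add: indicator_def)
    qed
    have "(\<integral>y. indicator (D n) y * cmod (e y) \<partial>M) \<le> (\<integral>y. K * indicator (D n) y + (cmod (e y))\<^sup>2 / K \<partial>M)"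
      by (rule integral_mono[OF int1])
         (use i2 D pw in \<open>auto intro!: Bochner_Integration.integrable_add integrable_mult_right integrable_divide_zero integrable_real_indicator simp: less_top[symmetric]\<close>)
    also have "\<dots> = (\<integral>y. K * indicator (D n) y \<partial>M) + (\<integral>y. (cmod (e y))\<^sup>2 / K \<partial>M)"
      by (rule Bochner_Integration.integral_add)
         (use i2 D in \<open>auto intro!: integrable_mult_right integrable_divide_zero integrable_real_indicator simp: less_top[symmetric]\<close>)
    also have "\<dots> = K * prob (D n) + E2 / K"
      using D spM by (simp add: E2_def)
    finally show ?thesis .
  qed
  show ?thesis
  proof (rule LIMSEQ_I)
    fix r :: real assume r: "0 < r"
    define K where "K = 2 * (E2 + 1) / r"
    have K: "K > 0" unfolding K_def using r E2 by simp
    have EK: "E2 / K < r / 2" unfolding K_def using r E2 by (simp add: field_simps)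
    obtain N where N: "\<forall>n\<ge>N. norm (prob (D n) - 0) < r / 2 / K"
      using LIMSEQ_D[OF D0, of "r / 2 / K"] r K by auto
    show "\<exists>no. \<forall>n\<ge>no. norm ((\<integral>y. indicator (D n) y * cmod (e y) \<partial>M) - 0) < r"
    proof (intro exI allI impI)
      fix n assume "N \<le> n"
      then have "prob (D n) < r / 2 / K" using N by simp
      then have kp: "K * prob (D n) < r / 2" using K by (simp add: field_simps)
      have nn: "0 \<le> (\<integral>y. indicator (D n) y * cmod (e y) \<partial>M)" by simp
      have "(\<integral>y. indicator (D n) y * cmod (e y) \<partial>M) < r" using bound[OF K, of n] EK kp by linarith
      then show "norm ((\<integral>y. indicator (D n) y * cmod (e y) \<partial>M) - 0) < r" using nn by simp
    qed
  qed
qed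

end

context erg begin

lemma AE_prob0: "A \<in> sets M \<Longrightarrow> prob A = 0 \<Longrightarrow> AE y in M. y \<notin> A"
proof -
  assume A: "A \<in> sets M" and p: "prob A = 0"
  have "emeasure M A = 0" using A p by (simp add: emeasure_eq_measure)
  moreover have "{x \<in> space M. \<not> x \<notin> A} = A" using A sets.sets_into_space by auto
  ultimately show ?thesis using AE_iff_measurable[OF A] by simp
qed

lemma inv_set:
  assumes erg: "ergodic M S" and A[measurable]: "A \<in> sets M" and ae: "AE y in M. (S y \<in> A \<longleftrightarrow> y \<in> A)"
  shows "prob A = 0 \<or> prob A = 1"
proof -
  have aek: "AE y in M. ((S ^^ k) y \<in> A \<longleftrightarrow> y \<in> A)" for k
  proof (induction k)
    case 0
    then show ?case by simp
  next
    case (Suc k)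
    have "AE y in M. ((S ^^ k) (S y) \<in> A \<longleftrightarrow> S y \<in> A)"
      by (rule AE_pres[OF Sm dS _ Suc]) measurable
    then show ?case using ae by eventually_elim (simp only: Spow_S)
  qed
  then have aeall: "AE y in M. \<forall>k. ((S ^^ k) y \<in> A \<longleftrightarrow> y \<in> A)" by (simp add: AE_all_countable)
  define B where "B = {y \<in> space M. \<forall>k. \<exists>j\<ge>k. (S ^^ j) y \<in> A}"
  have Bm: "B \<in> sets M" unfolding B_def by measurable
  have Binv: "S -` B \<inter> space M = B"
  proof
    show "S -` B \<inter> space M \<subseteq> B"
    proof
      fix y assume "y \<in> S -` B \<inter> space M"
      then have h: "\<forall>k. \<exists>j\<ge>k. (S ^^ j) (S y) \<in> A" by (simp add: B_def spM)
      have "\<exists>j\<ge>k. (S ^^ j) y \<in> A" for k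
      proof -
        obtain j where "j \<ge> k" "(S ^^ j) (S y) \<in> A" using h by blast
        then have "Suc j \<ge> k" "(S ^^ Suc j) y \<in> A" by (simp_all only: Spow_S)
        then show ?thesis by blast
      qed
      then show "y \<in> B" by (simp add: B_def spM)
    qed
    show "B \<subseteq> S -` B \<inter> space M"
    proof
      fix y assume "y \<in> B"
      then have h: "\<forall>k. \<exists>j\<ge>k. (S ^^ j) y \<in> A" by (simp add: B_def)
      have "\<exists>j\<ge>k. (S ^^ j) (S y) \<in> A" for k
      proof -
        obtain j where j: "j \<ge> Suc k" "(S ^^ j) y \<in> A" using h by blast
        then obtain j' where j': "j = Suc j'" by (cases j) auto
        then have "(S ^^ j') (S y) \<in> A" using j by (simp only: Spow_S)
        moreover have "j' \<ge> k" using j j' by simp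
        ultimately show ?thesis by blast
      qed
      then show "y \<in> S -` B \<inter> space M" by (simp add: B_def spM)
    qed
  qed
  have "AE y in M. (y \<in> B \<longleftrightarrow> y \<in> A)"
    using aeall
  proof eventually_elim
    case (elim y)
    show ?case
    proof
      assume "y \<in> B"
      then obtain j where "(S ^^ j) y \<in> A" by (auto simp: B_def)
      then show "y \<in> A" using elim by blast
    next
      assume "y \<in> A"
      then have "\<forall>k. \<exists>j\<ge>k. (S ^^ j) y \<in> A" using elim by blast
      then show "y \<in> B" by (simp add: B_def spM)
    qed
  qed
  then have "prob B = prob A" by (rule finite_measure_eq_AE[OF _ Bm A])
  moreover have "prob B = 0 \<or> prob B = 1" using erg Bm Binv unfolding ergodic_def by blast
  ultimately show ?thesis by simp
qed

lemma ae_const: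
  fixes h :: "'a \<Rightarrow> real"
  assumes erg: "ergodic M S" and h[measurable]: "h \<in> borel_measurable M" and ae: "AE y in M. h (S y) = h y"
  shows "\<exists>C. AE y in M. h y = C"
proof -
  define L where "L a = {y \<in> space M. h y \<le> a}" for a
  have Lm[measurable]: "L a \<in> sets M" for a unfolding L_def by measurable
  have F01: "prob (L a) = 0 \<or> prob (L a) = 1" for a
  proof (rule inv_set[OF erg Lm])
    show "AE y in M. (S y \<in> L a) = (y \<in> L a)" using ae by eventually_elim (simp add: L_def spM)
  qed
  have Lmono: "a \<le> b \<Longrightarrow> prob (L a) \<le> prob (L b)" for a b
    by (rule finite_measure_mono) (auto simp: L_def)
  have lim1: "(\<lambda>n. prob (L (real n))) \<longlonglongrightarrow> prob (\<Union>n. L (real n))"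
    by (rule finite_Lim_measure_incseq) (auto simp: incseq_def L_def)
  have "(\<Union>n. L (real n)) = space M"
    by (auto simp: L_def spM intro: real_nat_ceiling_ge)
  then have lim1': "(\<lambda>n. prob (L (real n))) \<longlonglongrightarrow> 1" using lim1 by (simp add: prob_space)
  obtain N1 where "\<forall>n\<ge>N1. norm (prob (L (real n)) - 1) < 1/2" using LIMSEQ_D[OF lim1', of "1/2"] by auto
  then have "norm (prob (L (real N1)) - 1) < 1/2" by simp
  then have N1: "prob (L (real N1)) = 1" using F01[of "real N1"] by auto
  have lim0: "(\<lambda>n. prob (L (- real n))) \<longlonglongrightarrow> prob (\<Inter>n. L (- real n))"
    by (rule finite_Lim_measure_decseq) (auto simp: decseq_def L_def)
  have "(\<Inter>n. L (- real n)) = {}"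
  proof -
    have "\<exists>n. h y > - real n" for y
      using real_nat_ceiling_ge[of "- h y"] by (intro exI[of _ "Suc (nat \<lceil>- h y\<rceil>)"]) linarith
    then show ?thesis by (auto simp: L_def not_le) (meson not_less)
  qed
  then have lim0': "(\<lambda>n. prob (L (- real n))) \<longlonglongrightarrow> 0" using lim0 by simp
  obtain N0 where "\<forall>n\<ge>N0. norm (prob (L (- real n)) - 0) < 1/2" using LIMSEQ_D[OF lim0', of "1/2"] by auto
  then have "norm (prob (L (- real N0)) - 0) < 1/2" by simp
  then have N0: "prob (L (- real N0)) = 0" using F01[of "- real N0"] by auto
  define Z where "Z = {a. prob (L a) = 0}"
  have Zne: "Z \<noteq> {}" using N0 Z_def by auto
  have Zb: "a \<le> real N1" if "a \<in> Z" for a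
  proof (rule ccontr)
    assume "\<not> a \<le> real N1"
    then have "prob (L (real N1)) \<le> prob (L a)" by (intro Lmono) simp
    then show False using N1 that Z_def by simp
  qed
  then have bZ: "bdd_above Z" by (auto simp: bdd_above_def)
  define C where "C = Sup Z"
  have ae1: "AE y in M. \<forall>n. C - inverse (real (Suc n)) < h y"
  proof (unfold AE_all_countable, intro allI)
    fix n
    have "C - inverse (real (Suc n)) < Sup Z" unfolding C_def by simp
    then obtain a where a: "a \<in> Z" "C - inverse (real (Suc n)) < a" using less_cSup_iff[OF Zne bZ] by blast
    have "prob (L (C - inverse (real (Suc n)))) \<le> prob (L a)" using a by (intro Lmono) simp
    then have "prob (L (C - inverse (real (Suc n)))) = 0" using a Z_def by (simp add: measure_nonneg antisym)
    then have "AE y in M. y \<notin> L (C - inverse (real (Suc n)))" by (rule AE_prob0[OF Lm])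
    then show "AE y in M. C - inverse (real (Suc n)) < h y" by eventually_elim (auto simp: L_def spM)
  qed
  have ae2: "AE y in M. \<forall>n. h y \<le> C + inverse (real (Suc n))"
  proof (unfold AE_all_countable, intro allI)
    fix n
    have "C + inverse (real (Suc n)) \<notin> Z"
    proof
      assume "C + inverse (real (Suc n)) \<in> Z"
      then have "C + inverse (real (Suc n)) \<le> C" unfolding C_def by (rule cSup_upper[OF _ bZ])
      then show False by simp
    qed
    then have p1: "prob (L (C + inverse (real (Suc n)))) = 1" using F01 Z_def by auto
    have "prob (space M - L (C + inverse (real (Suc n)))) = 0" using prob_compl[OF Lm] p1 by simp
    then have "AE y in M. y \<notin> space M - L (C + inverse (real (Suc n)))" by (intro AE_prob0) auto
    then show "AE y in M. h y \<le> C + inverse (real (Suc n))" by eventually_elim (auto simp: L_def spM)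
  qed
  have "AE y in M. h y = C"
    using ae1 ae2
  proof eventually_elim
    case (elim y)
    show ?case
    proof (rule ccontr)
      assume ne: "h y \<noteq> C"
      show False
      proof (cases "h y < C")
        case True
        then obtain n where "inverse (real (Suc n)) < C - h y" using reals_Archimedean[of "C - h y"] by auto
        then show False using elim(1)[rule_format, of n] by linarith
      next
        case False
        then have "h y > C" using ne by simp
        then obtain n where "inverse (real (Suc n)) < h y - C" using reals_Archimedean[of "h y - C"] by auto
        then show False using elim(2)[rule_format, of n] by linarith
      qed
    qed
  qed
  then show ?thesis by blast
qed

end

lemma sq_ineq: "0 \<le> x \<Longrightarrow> x \<le> a + b \<Longrightarrow> x\<^sup>2 \<le> 2 * a\<^sup>2 + 2 * (b::real)\<^sup>2"
proof -
  assume x: "0 \<le> x" "x \<le> a + b"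
  have "x\<^sup>2 \<le> (a + b)\<^sup>2" using x by (intro power_mono) auto
  moreover have "0 \<le> (a - b)\<^sup>2" by simp
  then have "(a + b)\<^sup>2 \<le> 2 * a\<^sup>2 + 2 * b\<^sup>2" by (simp add: power2_diff power2_sum)
  ultimately show ?thesis by linarith
qed

context erg begin

lemma L2_m: "L2fun M f \<Longrightarrow> f \<in> borel_measurable M" by (simp add: L2fun_def)

lemma L2_add: "L2fun M f \<Longrightarrow> L2fun M g \<Longrightarrow> L2fun M (\<lambda>y. f y + g y)"
proof -
  assume f: "L2fun M f" and g: "L2fun M g"
  note [measurable] = L2_m[OF f] L2_m[OF g]
  have i: "integrable M (\<lambda>y. 2 * (cmod (f y))\<^sup>2 + 2 * (cmod (g y))\<^sup>2)"
    using f g by (auto simp: L2fun_def)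
  have "integrable M (\<lambda>y. (cmod (f y + g y))\<^sup>2)"
  proof (rule Bochner_Integration.integrable_bound[OF i])
    show "(\<lambda>y. (cmod (f y + g y))\<^sup>2) \<in> borel_measurable M" by measurable
    show "AE y in M. norm ((cmod (f y + g y))\<^sup>2) \<le> norm (2 * (cmod (f y))\<^sup>2 + 2 * (cmod (g y))\<^sup>2)"
      by (intro always_eventually allI) (simp add: sq_ineq norm_triangle_ineq)
  qed
  then show ?thesis unfolding L2fun_def by simp
qed

lemma L2_scale: "L2fun M f \<Longrightarrow> L2fun M (\<lambda>y. c * f y)"
proof -
  assume f: "L2fun M f"
  note [measurable] = L2_m[OF f]
  show ?thesis using f unfolding L2fun_def by (simp add: norm_mult power_mult_distrib)
qed

lemma L2_zero: "L2fun M (\<lambda>y. 0)" unfolding L2fun_def by simp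

lemma L2_sum: "finite I \<Longrightarrow> (\<And>i. i \<in> I \<Longrightarrow> L2fun M (f i)) \<Longrightarrow> L2fun M (\<lambda>y. \<Sum>i\<in>I. f i y)"
proof (induction I rule: finite_induct)
  case empty
  then show ?case using L2_zero by simp
next
  case (insert x F)
  then show ?case by (simp add: L2_add)
qed

lemma L2_bdd: "f \<in> borel_measurable M \<Longrightarrow> (\<And>y. cmod (f y) \<le> B) \<Longrightarrow> L2fun M f"
proof -
  assume m[measurable]: "f \<in> borel_measurable M" and b: "\<And>y. cmod (f y) \<le> B"
  have "integrable M (\<lambda>y. (cmod (f y))\<^sup>2)"
  proof (rule integrable_const_bound[of _ "B\<^sup>2"])
    show "AE y in M. norm ((cmod (f y))\<^sup>2) \<le> B\<^sup>2"
      using b by (intro always_eventually allI) (simp add: power_mono)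
  qed measurable
  then show ?thesis using m by (simp add: L2fun_def)
qed

lemma L1_from_L2:
  assumes u: "L2fun M u" and d: "0 < d" and s: "(\<integral>y. (cmod (u y))\<^sup>2 \<partial>M) < d\<^sup>2"
  shows "(\<integral>y. cmod (u y) \<partial>M) \<le> 2 * d"
proof -
  have m[measurable]: "u \<in> borel_measurable M" and i2: "integrable M (\<lambda>y. (cmod (u y))\<^sup>2)"
    using u by (auto simp: L2fun_def)
  have pw: "cmod (u y) \<le> d + (cmod (u y))\<^sup>2 / d" for y
  proof (cases "cmod (u y) \<le> d")
    case True
    moreover have "0 \<le> (cmod (u y))\<^sup>2 / d" using d by simp
    ultimately show ?thesis by linarith
  next
    case False
    then have "cmod (u y) * d \<le> (cmod (u y))\<^sup>2" by (simp add: power2_eq_square mult_left_mono)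
    then have "cmod (u y) \<le> (cmod (u y))\<^sup>2 / d" using d by (simp add: field_simps)
    then show ?thesis using d by linarith
  qed
  have "(\<integral>y. cmod (u y) \<partial>M) \<le> (\<integral>y. d + (cmod (u y))\<^sup>2 / d \<partial>M)"
    by (rule integral_mono[OF L2_int[OF u]]) (use i2 pw in auto)
  also have "\<dots> = d + (\<integral>y. (cmod (u y))\<^sup>2 \<partial>M) / d"
    using i2 prob_space spM by simp
  also have "\<dots> \<le> d + d" using s d by (simp add: field_simps power2_eq_square)
  finally show ?thesis by simp
qed

lemma int_eg: "L2fun M e \<Longrightarrow> g \<in> borel_measurable M \<Longrightarrow> (\<And>y. \<bar>g y\<bar> \<le> B) \<Longrightarrow>
   integrable M (\<lambda>y. e y * complex_of_real (g y))"
proof -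
  assume e: "L2fun M e" and gm[measurable]: "g \<in> borel_measurable M" and b: "\<And>y. \<bar>g y\<bar> \<le> B"
  note [measurable] = L2_m[OF e]
  show ?thesis
  proof (rule Bochner_Integration.integrable_bound[of _ "\<lambda>y. B * cmod (e y)"])
    show "integrable M (\<lambda>y. B * cmod (e y))" using L2_int[OF e] by simp
    show "(\<lambda>y. e y * complex_of_real (g y)) \<in> borel_measurable M" by measurable
    show "AE y in M. norm (e y * complex_of_real (g y)) \<le> norm (B * cmod (e y))"
    proof (intro always_eventually allI)
      fix y
      have "norm (e y * complex_of_real (g y)) = \<bar>g y\<bar> * cmod (e y)" by (simp add: norm_mult)
      also have "\<dots> \<le> B * cmod (e y)" using b[of y] by (intro mult_right_mono) auto
      also have "\<dots> \<le> norm (B * cmod (e y))" by simp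
      finally show "norm (e y * complex_of_real (g y)) \<le> norm (B * cmod (e y))" .
    qed
  qed
qed

lemma eig_conv:
  assumes erg: "ergodic M S" and ef: "eigenfunction M S e"
    and HF: "(\<lambda>n. \<integral>y. F (m n) y \<partial>M) \<longlonglongrightarrow> c1" and Dm: "(\<lambda>n. prob (Dset (Spow (m n)))) \<longlonglongrightarrow> 0"
  shows "(\<lambda>n. \<integral>y. e y * complex_of_real (F (m n) y) \<partial>M) \<longlonglongrightarrow> complex_of_real c1 * (\<integral>y. e y \<partial>M)"
proof -
  from ef obtain lam where L2: "L2fun M e" and ae: "AE y in M. e (S y) = lam * e y"
    unfolding eigenfunction_def by blast
  note em[measurable] = L2_m[OF L2]
  have ie: "integrable M e" using L2_int[OF L2] by (simp add: integrable_norm_iff)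
  define I where "I n = (\<integral>y. e y * complex_of_real (F (m n) y) \<partial>M)" for n
  define J where "J n = (\<integral>y. e y * complex_of_real (F (m n) (S y)) \<partial>M)" for n
  have iI: "integrable M (\<lambda>y. e y * complex_of_real (F (m n) y))" for n
    by (rule int_eg[OF L2, of _ 1]) (auto simp: F_pm)
  have iJ: "integrable M (\<lambda>y. e y * complex_of_real (F (m n) (S y)))" for n
    by (rule int_eg[OF L2, of _ 1]) (auto simp: F_pm)
  have IJ: "I n = lam * J n" for n
  proof -
    have "I n = (\<integral>y. e (S y) * complex_of_real (F (m n) (S y)) \<partial>M)"
      unfolding I_def by (rule int_pres[OF Sm dS, symmetric]) measurable
    also have "\<dots> = (\<integral>y. lam * (e y * complex_of_real (F (m n) (S y))) \<partial>M)"
      by (rule integral_cong_AE) (measurable, use ae in \<open>eventually_elim, simp\<close>)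
    also have "\<dots> = lam * J n" unfolding J_def by simp
    finally show ?thesis .
  qed
  have JI: "(\<lambda>n. J n - I n) \<longlonglongrightarrow> 0"
  proof (rule Lim_null_comparison)
    have "(\<lambda>n. 2 * (\<integral>y. indicator (Dset (Spow (m n))) y * cmod (e y) \<partial>M)) \<longlonglongrightarrow> 2 * 0"
      by (intro tendsto_mult_left UI[OF L2 _ Dm] Dset_m Spow_m_int)
    then show "(\<lambda>n. 2 * (\<integral>y. indicator (Dset (Spow (m n))) y * cmod (e y) \<partial>M)) \<longlonglongrightarrow> 0" by simp
    show "\<forall>\<^sub>F n in sequentially. norm (J n - I n) \<le> 2 * (\<integral>y. indicator (Dset (Spow (m n))) y * cmod (e y) \<partial>M)"
    proof (intro always_eventually allI)
      fix n
      have iD: "integrable M (\<lambda>y. indicator (Dset (Spow (m n))) y * cmod (e y))"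
      proof (rule Bochner_Integration.integrable_bound[OF L2_int[OF L2]])
        show "(\<lambda>y. indicator (Dset (Spow (m n))) y * cmod (e y)) \<in> borel_measurable M"
          using Dset_m[OF Spow_m_int] by measurable
      qed (auto simp: indicator_def)
      have "J n - I n = (\<integral>y. e y * complex_of_real (F (m n) (S y)) - e y * complex_of_real (F (m n) y) \<partial>M)"
        unfolding J_def I_def by (rule Bochner_Integration.integral_diff[symmetric, OF iJ iI])
      also have "norm \<dots> \<le> (\<integral>y. norm (e y * complex_of_real (F (m n) (S y)) - e y * complex_of_real (F (m n) y)) \<partial>M)"
        by (rule integral_norm_bound)
      also have "\<dots> \<le> (\<integral>y. 2 * (indicator (Dset (Spow (m n))) y * cmod (e y)) \<partial>M)"
      proof (rule integral_mono)
        show "integrable M (\<lambda>y. norm (e y * complex_of_real (F (m n) (S y)) - e y * complex_of_real (F (m n) y)))"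
          using iJ iI by (intro integrable_norm Bochner_Integration.integrable_diff)
        show "integrable M (\<lambda>y. 2 * (indicator (Dset (Spow (m n))) y * cmod (e y)))" using iD by simp
        fix y
        have "norm (e y * complex_of_real (F (m n) (S y)) - e y * complex_of_real (F (m n) y))
            = cmod (e y) * \<bar>F (m n) (S y) - F (m n) y\<bar>"
          by (simp add: right_diff_distrib[symmetric] norm_mult flip: of_real_diff)
        also have "\<dots> \<le> cmod (e y) * (2 * indicator (Dset (Spow (m n))) y)"
          by (intro mult_left_mono F_shift_bound) simp
        finally show "norm (e y * complex_of_real (F (m n) (S y)) - e y * complex_of_real (F (m n) y))
            \<le> 2 * (indicator (Dset (Spow (m n))) y * cmod (e y))" by (simp add: mult_ac)
      qed
      also have "\<dots> = 2 * (\<integral>y. indicator (Dset (Spow (m n))) y * cmod (e y) \<partial>M)" by simp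
      finally show "norm (J n - I n) \<le> 2 * (\<integral>y. indicator (Dset (Spow (m n))) y * cmod (e y) \<partial>M)" .
    qed
  qed
  show ?thesis
  proof (cases "lam = 1")
    case True
    have ae1: "AE y in M. e (S y) = e y" using ae True by simp
    have aR: "AE y in M. Re (e (S y)) = Re (e y)" using ae1 by eventually_elim simp
    have aI: "AE y in M. Im (e (S y)) = Im (e y)" using ae1 by eventually_elim simp
    have "\<exists>C. AE y in M. Re (e y) = C" by (rule ae_const[OF erg _ aR]) measurable
    then obtain a where a: "AE y in M. Re (e y) = a" by blast
    have "\<exists>C. AE y in M. Im (e y) = C" by (rule ae_const[OF erg _ aI]) measurable
    then obtain b where b: "AE y in M. Im (e y) = b" by blast
    define C0 where "C0 = Complex a b"
    have aeC: "AE y in M. e y = C0" using a b by eventually_elim (simp add: C0_def complex_eq_iff)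
    have In: "I n = C0 * complex_of_real (\<integral>y. F (m n) y \<partial>M)" for n
    proof -
      have "I n = (\<integral>y. C0 * complex_of_real (F (m n) y) \<partial>M)"
        unfolding I_def by (rule integral_cong_AE) (measurable, use aeC in \<open>eventually_elim, simp\<close>)
      then show ?thesis by simp
    qed
    have ie1: "(\<integral>y. e y \<partial>M) = C0"
    proof -
      have "(\<integral>y. e y \<partial>M) = (\<integral>y. C0 \<partial>M)"
        by (rule integral_cong_AE) (measurable, use aeC in simp)
      then show ?thesis using prob_space spM by simp
    qed
    have "(\<lambda>n. C0 * complex_of_real (\<integral>y. F (m n) y \<partial>M)) \<longlonglongrightarrow> C0 * complex_of_real c1"
      by (intro tendsto_intros HF)
    then show ?thesis unfolding I_def[symmetric] In ie1 by (simp add: mult.commute)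
  next
    case False
    have ie0: "(\<integral>y. e y \<partial>M) = 0"
    proof -
      have "(\<integral>y. e y \<partial>M) = (\<integral>y. e (S y) \<partial>M)" by (rule int_pres[OF Sm dS, symmetric]) measurable
      also have "\<dots> = (\<integral>y. lam * e y \<partial>M)"
        by (rule integral_cong_AE) (measurable, use ae in simp)
      also have "\<dots> = lam * (\<integral>y. e y \<partial>M)" by simp
      finally have "(1 - lam) * (\<integral>y. e y \<partial>M) = 0" by (simp add: algebra_simps)
      then show ?thesis using False by simp
    qed
    have "I n = lam / (1 - lam) * (J n - I n)" for n
      using IJ[of n] False by (simp add: field_simps)
    moreover have "(\<lambda>n. lam / (1 - lam) * (J n - I n)) \<longlonglongrightarrow> lam / (1 - lam) * 0"
      by (intro tendsto_intros JI)
    ultimately have "I \<longlonglongrightarrow> 0" by simp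
    then show ?thesis unfolding I_def ie0 by simp
  qed
qed

end

context erg begin

lemma W_base:
  assumes erg: "ergodic M S" and ds: "discrete_spectrum M S"
    and HF: "(\<lambda>n. \<integral>y. F (m n) y \<partial>M) \<longlonglongrightarrow> c1" and Dm: "(\<lambda>n. prob (Dset (Spow (m n)))) \<longlonglongrightarrow> 0"
    and G: "L2fun M G"
  shows "(\<lambda>n. \<integral>y. G y * complex_of_real (F (m n) y) \<partial>M) \<longlonglongrightarrow> complex_of_real c1 * (\<integral>y. G y \<partial>M)"
proof -
  note Gm[measurable] = L2_m[OF G]
  have ex: "\<forall>j. \<exists>Fs c. finite Fs \<and> (\<forall>f\<in>Fs. eigenfunction M S f) \<and>
      (\<integral>y. (cmod (G y - (\<Sum>f\<in>Fs. c f * f y)))\<^sup>2 \<partial>M) < (inverse (real (Suc j)))\<^sup>2"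
  proof
    fix j
    have "0 < (inverse (real (Suc j)))\<^sup>2" by simp
    then show "\<exists>Fs c. finite Fs \<and> (\<forall>f\<in>Fs. eigenfunction M S f) \<and>
      (\<integral>y. (cmod (G y - (\<Sum>f\<in>Fs. c f * f y)))\<^sup>2 \<partial>M) < (inverse (real (Suc j)))\<^sup>2"
      using ds G unfolding discrete_spectrum_def by blast
  qed
  from choice[OF ex] obtain Fs where "\<forall>j. \<exists>c. finite (Fs j) \<and> (\<forall>f\<in>Fs j. eigenfunction M S f) \<and>
      (\<integral>y. (cmod (G y - (\<Sum>f\<in>Fs j. c f * f y)))\<^sup>2 \<partial>M) < (inverse (real (Suc j)))\<^sup>2" by blast
  from choice[OF this] obtain cs where cs: "\<And>j. finite (Fs j)" "\<And>j f. f \<in> Fs j \<Longrightarrow> eigenfunction M S f"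
    "\<And>j. (\<integral>y. (cmod (G y - (\<Sum>f\<in>Fs j. cs j f * f y)))\<^sup>2 \<partial>M) < (inverse (real (Suc j)))\<^sup>2" by blast
  define P where "P j y = (\<Sum>f\<in>Fs j. cs j f * f y)" for j y
  have fL2: "f \<in> Fs j \<Longrightarrow> L2fun M f" for f j using cs(2) unfolding eigenfunction_def by blast
  have PL2: "L2fun M (P j)" for j unfolding P_def by (rule L2_sum[OF cs(1)]) (intro L2_scale fL2)
  note Pm[measurable] = L2_m[OF PL2]
  have ifF: "integrable M (\<lambda>y. f y * complex_of_real (F (m n) y))" if "f \<in> Fs j" for f j n
    by (rule int_eg[OF fL2[OF that], of _ 1]) (auto simp: F_pm)
  have if1: "integrable M f" if "f \<in> Fs j" for f j
    using L2_int[OF fL2[OF that]] L2_m[OF fL2[OF that]] by (simp add: integrable_norm_iff)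
  have QP: "(\<lambda>n. \<integral>y. P j y * complex_of_real (F (m n) y) \<partial>M) \<longlonglongrightarrow> complex_of_real c1 * (\<integral>y. P j y \<partial>M)" for j
  proof -
    have e1: "(\<integral>y. P j y * complex_of_real (F (m n) y) \<partial>M) =
        (\<Sum>f\<in>Fs j. cs j f * (\<integral>y. f y * complex_of_real (F (m n) y) \<partial>M))" for n
    proof -
      have "(\<integral>y. P j y * complex_of_real (F (m n) y) \<partial>M) =
          (\<integral>y. (\<Sum>f\<in>Fs j. cs j f * (f y * complex_of_real (F (m n) y))) \<partial>M)"
        unfolding P_def by (simp add: sum_distrib_right mult.assoc)
      also have "\<dots> = (\<Sum>f\<in>Fs j. (\<integral>y. cs j f * (f y * complex_of_real (F (m n) y)) \<partial>M))"
        using Bochner_Integration.integral_sum[where I="Fs j" and f="\<lambda>f y. cs j f * (f y * complex_of_real (F (m n) y))"] ifF by auto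
      finally show ?thesis by simp
    qed
    have e2: "(\<integral>y. P j y \<partial>M) = (\<Sum>f\<in>Fs j. cs j f * (\<integral>y. f y \<partial>M))"
    proof -
      have "(\<integral>y. P j y \<partial>M) = (\<Sum>f\<in>Fs j. (\<integral>y. cs j f * f y \<partial>M))"
        unfolding P_def using Bochner_Integration.integral_sum[where I="Fs j" and f="\<lambda>f y. cs j f * f y"] if1 by auto
      then show ?thesis by simp
    qed
    have "(\<lambda>n. \<Sum>f\<in>Fs j. cs j f * (\<integral>y. f y * complex_of_real (F (m n) y) \<partial>M))
        \<longlonglongrightarrow> (\<Sum>f\<in>Fs j. cs j f * (complex_of_real c1 * (\<integral>y. f y \<partial>M)))"
      by (intro tendsto_sum tendsto_mult_left eig_conv[OF erg _ HF Dm] cs(2))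
    then show ?thesis unfolding e1 e2 by (simp add: sum_distrib_left mult_ac)
  qed
  define \<delta> where "\<delta> j = (1 + \<bar>c1\<bar>) * (2 * inverse (real (Suc j)))" for j
  have L1: "(\<integral>y. cmod (P j y - G y) \<partial>M) \<le> 2 * inverse (real (Suc j))" for j
  proof -
    have "(\<integral>y. cmod (G y - P j y) \<partial>M) \<le> 2 * inverse (real (Suc j))"
    proof (rule L1_from_L2)
      show "L2fun M (\<lambda>y. G y - P j y)" using L2_add[OF G L2_scale[OF PL2[of j], of "-1"]] by simp
      show "(\<integral>y. (cmod (G y - P j y))\<^sup>2 \<partial>M) < (inverse (real (Suc j)))\<^sup>2" using cs(3)[of j] by (simp add: P_def)
    qed simp
    then show ?thesis by (simp add: norm_minus_commute)
  qed
  have iPG: "integrable M (\<lambda>y. cmod (P j y - G y))" for j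
    using L2_int[OF L2_add[OF PL2[of j] L2_scale[OF G, of "-1"]]] by simp
  show ?thesis
  proof (rule approx_lim[where \<delta>=\<delta>, OF QP])
    show "cmod ((\<integral>y. P j y * complex_of_real (F (m n) y) \<partial>M) - (\<integral>y. G y * complex_of_real (F (m n) y) \<partial>M)) \<le> \<delta> j" for j n
    proof -
      have iP: "integrable M (\<lambda>y. P j y * complex_of_real (F (m n) y))" by (rule int_eg[OF PL2, of _ 1]) (auto simp: F_pm)
      have iG: "integrable M (\<lambda>y. G y * complex_of_real (F (m n) y))" by (rule int_eg[OF G, of _ 1]) (auto simp: F_pm)
      have "(\<integral>y. P j y * complex_of_real (F (m n) y) \<partial>M) - (\<integral>y. G y * complex_of_real (F (m n) y) \<partial>M)
          = (\<integral>y. P j y * complex_of_real (F (m n) y) - G y * complex_of_real (F (m n) y) \<partial>M)"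
        by (rule Bochner_Integration.integral_diff[symmetric, OF iP iG])
      also have "cmod \<dots> \<le> (\<integral>y. cmod (P j y * complex_of_real (F (m n) y) - G y * complex_of_real (F (m n) y)) \<partial>M)"
        by (rule integral_norm_bound)
      also have "\<dots> = (\<integral>y. cmod (P j y - G y) \<partial>M)"
        by (rule Bochner_Integration.integral_cong)
           (auto simp: left_diff_distrib[symmetric] norm_mult F_pm)
      also have "\<dots> \<le> 2 * inverse (real (Suc j))" by (rule L1)
      also have "\<dots> \<le> \<delta> j" unfolding \<delta>_def by (simp add: distrib_right)
      finally show ?thesis .
    qed
    show "cmod (complex_of_real c1 * (\<integral>y. P j y \<partial>M) - complex_of_real c1 * (\<integral>y. G y \<partial>M)) \<le> \<delta> j" for j
    proof -
      have iP: "integrable M (P j)" using L2_int[OF PL2[of j]] by (simp add: integrable_norm_iff)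
      have iG: "integrable M G" using L2_int[OF G] by (simp add: integrable_norm_iff)
      have "complex_of_real c1 * (\<integral>y. P j y \<partial>M) - complex_of_real c1 * (\<integral>y. G y \<partial>M)
          = complex_of_real c1 * (\<integral>y. P j y - G y \<partial>M)"
        using iP iG by (simp add: right_diff_distrib)
      also have "cmod \<dots> \<le> \<bar>c1\<bar> * (\<integral>y. cmod (P j y - G y) \<partial>M)"
        by (simp add: norm_mult mult_left_mono integral_norm_bound)
      also have "\<dots> \<le> \<bar>c1\<bar> * (2 * inverse (real (Suc j)))" by (intro mult_left_mono L1) simp
      also have "\<dots> \<le> \<delta> j" unfolding \<delta>_def by (simp add: distrib_right)
      finally show ?thesis .
    qed
    have "(\<lambda>j. (1 + \<bar>c1\<bar>) * (2 * inverse (real (Suc j)))) \<longlonglongrightarrow> (1 + \<bar>c1\<bar>) * (2 * 0)"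
      by (intro tendsto_intros LIMSEQ_inverse_real_of_nat)
    then show "\<delta> \<longlonglongrightarrow> 0" unfolding \<delta>_def by simp
  qed
qed

lemma W_real:
  assumes erg: "ergodic M S" and ds: "discrete_spectrum M S"
    and HF: "(\<lambda>n. \<integral>y. F (m n) y \<partial>M) \<longlonglongrightarrow> c1" and Dm: "(\<lambda>n. prob (Dset (Spow (m n)))) \<longlonglongrightarrow> 0"
    and Gm[measurable]: "G \<in> borel_measurable M" and Gb: "\<And>y. \<bar>G y\<bar> \<le> B"
  shows "(\<lambda>n. \<integral>y. G y * F (m n) y \<partial>M) \<longlonglongrightarrow> c1 * (\<integral>y. G y \<partial>M)"
proof -
  have L2: "L2fun M (\<lambda>y. complex_of_real (G y))" by (rule L2_bdd[of _ B]) (use Gb in auto)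
  have "(\<lambda>n. \<integral>y. complex_of_real (G y) * complex_of_real (F (m n) y) \<partial>M) \<longlonglongrightarrow>
      complex_of_real c1 * (\<integral>y. complex_of_real (G y) \<partial>M)"
    by (rule W_base[OF erg ds HF Dm L2])
  then have "(\<lambda>n. complex_of_real (\<integral>y. G y * F (m n) y \<partial>M)) \<longlonglongrightarrow> complex_of_real (c1 * (\<integral>y. G y \<partial>M))"
    by (simp flip: of_real_mult)
  then show ?thesis by (simp only: tendsto_of_real_iff)
qed

lemma shiftT:
  assumes [measurable]: "G \<in> borel_measurable M" "H \<in> borel_measurable M"
  shows "(\<integral>y. G y * (eps y * H (S y)) \<partial>M) = (\<integral>x. (G (T x) * eps (T x)) * H x \<partial>M)"
proof -
  have "(\<integral>x. G (T x) * (eps (T x) * H (S (T x))) \<partial>M) = (\<integral>y. G y * (eps y * H (S y)) \<partial>M)"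
    by (rule int_pres[OF Tm dT]) measurable
  then show ?thesis by (simp add: mult_ac)
qed

lemma shiftS:
  assumes [measurable]: "G \<in> borel_measurable M" "H \<in> borel_measurable M"
  shows "(\<integral>x. G x * (eps (T x) * H (T x)) \<partial>M) = (\<integral>y. (G (S y) * eps y) * H y \<partial>M)"
proof -
  have "(\<integral>y. G (S y) * (eps (T (S y)) * H (T (S y))) \<partial>M) = (\<integral>x. G x * (eps (T x) * H (T x)) \<partial>M)"
    by (rule int_pres[OF Sm dS]) measurable
  then show ?thesis by (simp add: mult_ac)
qed

lemma F_down: "F j x = eps (T x) * F (j + 1) (T x)"
proof -
  have "F (j + 1) (T x) = eps (T x) * F j (S (T x))" by (rule C1)
  then have "eps (T x) * F (j + 1) (T x) = (eps (T x) * eps (T x)) * F j x" by (simp add: mult.assoc)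
  then show ?thesis by (simp add: eps_sq)
qed

lemma eps_abs: "\<bar>eps y\<bar> = 1" using eps_pm[of y] by auto

lemma E_all:
  assumes W: "\<And>G B. G \<in> borel_measurable M \<Longrightarrow> (\<And>y. \<bar>G y\<bar> \<le> B) \<Longrightarrow>
      (\<lambda>n. \<integral>y. G y * F (m n) y \<partial>M) \<longlonglongrightarrow> c1 * (\<integral>y. G y \<partial>M)"
  shows "\<And>G B. G \<in> borel_measurable M \<Longrightarrow> (\<And>y. \<bar>G y\<bar> \<le> B) \<Longrightarrow>
      (\<lambda>n. \<integral>y. G y * F (m n + k) y \<partial>M) \<longlonglongrightarrow> c1 * (\<integral>y. G y * F k y \<partial>M)"
proof (induction k rule: int_induct[where k=0])
  case base
  have F0: "F 0 y = 1" for y by (simp add: F_def cocycle_def)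
  show ?case using W[OF base.prems] by (simp add: F0)
next
  case (step1 i)
  note Gm[measurable] = step1.prems(1)
  define G' where "G' x = G (T x) * eps (T x)" for x
  have G'm[measurable]: "G' \<in> borel_measurable M" unfolding G'_def by measurable
  have G'b: "\<bar>G' x\<bar> \<le> B" for x unfolding G'_def using step1.prems(2)[of "T x"] by (simp add: abs_mult eps_abs)
  have eq1: "(\<integral>y. G y * F (m n + (i + 1)) y \<partial>M) = (\<integral>x. G' x * F (m n + i) x \<partial>M)" for n
  proof -
    have "(\<integral>y. G y * F (m n + (i + 1)) y \<partial>M) = (\<integral>y. G y * (eps y * F (m n + i) (S y)) \<partial>M)"
      by (simp only: add.assoc[symmetric] C1)
    also have "\<dots> = (\<integral>x. G' x * F (m n + i) x \<partial>M)" unfolding G'_def by (rule shiftT) measurable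
    finally show ?thesis .
  qed
  have eq2: "(\<integral>y. G y * F (i + 1) y \<partial>M) = (\<integral>x. G' x * F i x \<partial>M)"
  proof -
    have "(\<integral>y. G y * F (i + 1) y \<partial>M) = (\<integral>y. G y * (eps y * F i (S y)) \<partial>M)"
      by (simp only: C1)
    also have "\<dots> = (\<integral>x. G' x * F i x \<partial>M)" unfolding G'_def by (rule shiftT) measurable
    finally show ?thesis .
  qed
  show ?case unfolding eq1 eq2 by (rule step1.IH[OF G'm G'b])
next
  case (step2 i)
  note Gm[measurable] = step2.prems(1)
  define G' where "G' y = G (S y) * eps y" for y
  have G'm[measurable]: "G' \<in> borel_measurable M" unfolding G'_def by measurable
  have G'b: "\<bar>G' x\<bar> \<le> B" for x unfolding G'_def using step2.prems(2)[of "S x"] by (simp add: abs_mult eps_abs)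
  have eq1: "(\<integral>y. G y * F (m n + (i - 1)) y \<partial>M) = (\<integral>x. G' x * F (m n + i) x \<partial>M)" for n
  proof -
    have e: "m n + i = (m n + (i - 1)) + 1" by simp
    have "(\<integral>y. G y * F (m n + (i - 1)) y \<partial>M) = (\<integral>y. G y * (eps (T y) * F (m n + i) (T y)) \<partial>M)"
      by (simp only: e F_down[of "m n + (i - 1)"])
    also have "\<dots> = (\<integral>x. G' x * F (m n + i) x \<partial>M)" unfolding G'_def by (rule shiftS) measurable
    finally show ?thesis .
  qed
  have eq2: "(\<integral>y. G y * F (i - 1) y \<partial>M) = (\<integral>x. G' x * F i x \<partial>M)"
  proof -
    have e: "i = (i - 1) + 1" by simp
    have "(\<integral>y. G y * F (i - 1) y \<partial>M) = (\<integral>y. G y * (eps (T y) * F i (T y)) \<partial>M)"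
      by (subst (2) e, simp only: F_down[of "i - 1"])
    also have "\<dots> = (\<integral>x. G' x * F i x \<partial>M)" unfolding G'_def by (rule shiftS) measurable
    finally show ?thesis .
  qed
  show ?case unfolding eq1 eq2 by (rule step2.IH[OF G'm G'b])
qed

end

lemma spectral_side:
  fixes M :: "'a::topological_space measure" and S \<phi> and \<sigma> :: "complex measure" and q :: "nat \<Rightarrow> nat"
    and j t :: int and c :: real
  assumes E: "erg M S \<phi>" and erg: "ergodic M S" and ds: "discrete_spectrum M S" and rig: "weakly_rigid M S q"
    and sp: "is_spectral_measure_one M S \<phi> \<sigma>"
    and HF: "(\<lambda>n. \<integral>y. (-1::real) ^ cocycle S \<phi> (j * t * int (q n)) y \<partial>M) \<longlonglongrightarrow> c"
  shows "\<And>H. H \<in> borel_measurable borel \<Longrightarrow> (\<And>x. 0 \<le> H x \<and> H x \<le> 1) \<Longrightarrow>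
       (\<lambda>n. \<integral>x. complex_of_real (H x) * x powi (t * int (q n)) \<partial>pow_image \<sigma> j)
         \<longlonglongrightarrow> complex_of_real c * complex_of_real (\<integral>x. H x \<partial>pow_image \<sigma> j)"
proof -
  interpret erg M S \<phi> by (rule E)
  define m where "m n = j * t * int (q n)" for n
  have HF': "(\<lambda>n. \<integral>y. F (m n) y \<partial>M) \<longlonglongrightarrow> c" using HF by (simp add: F_def m_def)
  have Dm: "(\<lambda>n. prob (Dset (Spow (m n)))) \<longlonglongrightarrow> 0" unfolding m_def by (rule D_mn[OF rig])
  have W: "\<And>G B. G \<in> borel_measurable M \<Longrightarrow> (\<And>y. \<bar>G y\<bar> \<le> B) \<Longrightarrow>
      (\<lambda>n. \<integral>y. G y * F (m n) y \<partial>M) \<longlonglongrightarrow> c * (\<integral>y. G y \<partial>M)"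
    by (rule W_real[OF erg ds HF' Dm])
  have Ek: "(\<lambda>n. \<integral>y. F (m n + k) y \<partial>M) \<longlonglongrightarrow> c * (\<integral>y. F k y \<partial>M)" for k
  proof -
    have "(\<lambda>n. \<integral>y. 1 * F (m n + k) y \<partial>M) \<longlonglongrightarrow> c * (\<integral>y. 1 * F k y \<partial>M)"
      apply (rule E_all[where G="\<lambda>y. 1" and B=1 and k=k])
        apply (rule W)
         apply assumption
        apply assumption
       apply simp
      apply simp
      done
    then show ?thesis by simp
  qed
  have ssets: "sets \<sigma> = sets borel" and sfin: "finite_measure \<sigma>"
    and ssph: "emeasure \<sigma> (UNIV - sphere 0 1) = 0"
    and coef: "\<And>k. (\<integral>z. z powi k \<partial>\<sigma>) = complex_of_real (\<integral>y. F k y \<partial>M)"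
    using sp unfolding is_spectral_measure_one_def F_def by auto
  interpret circ \<sigma> using ssets sfin ssph by (simp add: circ_def)
  have mono: "Qc m (complex_of_real c) (\<lambda>z. z powi k)" for k
  proof -
    have eq: "(\<integral>z. z powi k * z powi (m n) \<partial>\<sigma>) = complex_of_real (\<integral>y. F (m n + k) y \<partial>M)" for n
    proof -
      have "(\<integral>z. z powi k * z powi (m n) \<partial>\<sigma>) = (\<integral>z. z powi (m n + k) \<partial>\<sigma>)"
      proof (rule integral_cong_AE)
        show "(\<lambda>z. z powi k * z powi m n) \<in> borel_measurable \<sigma>" by (simp add: meas_\<sigma>)
        show "(\<lambda>z. z powi (m n + k)) \<in> borel_measurable \<sigma>" by (simp add: meas_\<sigma>)
        show "AE z in \<sigma>. z powi k * z powi m n = z powi (m n + k)"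
          using AE_sph
        proof eventually_elim
          case (elim z)
          then have "z \<noteq> 0" by auto
          then show ?case by (simp add: power_int_add mult.commute)
        qed
      qed
      then show ?thesis using coef by simp
    qed
    have "(\<lambda>n. complex_of_real (\<integral>y. F (m n + k) y \<partial>M)) \<longlonglongrightarrow> complex_of_real (c * (\<integral>y. F k y \<partial>M))"
      by (rule tendsto_of_real[OF Ek])
    then show ?thesis unfolding Qc_def eq coef by simp
  qed
  fix H :: "complex \<Rightarrow> real"
  assume Hm[measurable]: "H \<in> borel_measurable borel" and Hb: "\<And>x. 0 \<le> H x \<and> H x \<le> 1"
  have Q: "Qc m (complex_of_real c) (\<lambda>z. complex_of_real (H (z powi j)))"
    by (rule Qc_bounded[OF mono, of "\<lambda>z. H (z powi j)"]) (use Hb in auto)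
  have pm: "(\<lambda>z::complex. z powi j) \<in> \<sigma> \<rightarrow>\<^sub>M borel" by (simp add: meas_\<sigma>)
  have i1: "(\<integral>x. complex_of_real (H x) * x powi (t * int (q n)) \<partial>pow_image \<sigma> j)
      = (\<integral>z. complex_of_real (H (z powi j)) * z powi (m n) \<partial>\<sigma>)" for n
  proof -
    have "(\<integral>x. complex_of_real (H x) * x powi (t * int (q n)) \<partial>pow_image \<sigma> j)
        = (\<integral>z. complex_of_real (H (z powi j)) * (z powi j) powi (t * int (q n)) \<partial>\<sigma>)"
      unfolding pow_image_def by (rule integral_distr[OF pm]) measurable
    also have "\<dots> = (\<integral>z. complex_of_real (H (z powi j)) * z powi (m n) \<partial>\<sigma>)"
      by (simp add: m_def power_int_mult[symmetric] mult.assoc)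
    finally show ?thesis .
  qed
  have i2: "(\<integral>x. H x \<partial>pow_image \<sigma> j) = (\<integral>z. H (z powi j) \<partial>\<sigma>)"
    unfolding pow_image_def by (rule integral_distr[OF pm]) measurable
  show "(\<lambda>n. \<integral>x. complex_of_real (H x) * x powi (t * int (q n)) \<partial>pow_image \<sigma> j)
         \<longlonglongrightarrow> complex_of_real c * complex_of_real (\<integral>x. H x \<partial>pow_image \<sigma> j)"
    using Q unfolding Qc_def i1 i2 by simp
qed


theorem corollary2p2:
  fixes M :: "'a::polish_space measure" and S :: "'a \<Rightarrow> 'a" and q :: "nat \<Rightarrow> nat"
    and \<phi> :: "'a \<Rightarrow> nat" and \<sigma> :: "complex measure" and r s t :: int and c1 c2 :: real
  assumes "prob_space M" and "space M = UNIV" and "sets M = sets borel"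
    and "mp_automorphism M S" and "ergodic M S" and "discrete_spectrum M S"
    and "strict_mono q" and "weakly_rigid M S q"
    and "\<phi> \<in> borel_measurable M" and "\<And>y. \<phi> y \<in> {0, 1}"
    and "is_spectral_measure_one M S \<phi> \<sigma>"
    and "r \<noteq> s"
    and "(\<lambda>n. \<integral>y. (-1::real) ^ cocycle S \<phi> (r * t * int (q n)) y \<partial>M) \<longlonglongrightarrow> c1"
    and "(\<lambda>n. \<integral>y. (-1::real) ^ cocycle S \<phi> (s * t * int (q n)) y \<partial>M) \<longlonglongrightarrow> c2"
    and "c1 \<noteq> c2"
  shows "mutually_singular (pow_image \<sigma> r) (pow_image \<sigma> s)"
proof -
  have E: "erg M S \<phi>" unfolding erg_def using assms(1,2,3,4,9,10) by blast
  have sp: "sets \<sigma> = sets borel" "finite_measure \<sigma>"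
    using assms(11) unfolding is_spectral_measure_one_def by auto
  have pm: "(\<lambda>z::complex. z powi k) \<in> \<sigma> \<rightarrow>\<^sub>M borel" for k
    unfolding measurable_cong_sets[OF sp(1) refl, of borel] by (rule powi_meas)
  show ?thesis
  proof (rule sing_lemma[where h="\<lambda>n x. x powi (t * int (q n))"])
    show "sets (pow_image \<sigma> r) = sets borel" "sets (pow_image \<sigma> s) = sets borel"
      by (simp_all add: pow_image_def)
    show "finite_measure (pow_image \<sigma> r)" "finite_measure (pow_image \<sigma> s)"
      unfolding pow_image_def by (simp_all add: finite_measure.finite_measure_distr[OF sp(2) pm])
    show "(\<lambda>x::complex. x powi (t * int (q n))) \<in> borel_measurable borel" for n by (rule powi_meas)
    show "complex_of_real c1 \<noteq> complex_of_real c2" using assms(15) by simp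
    show "(\<lambda>n. \<integral>x. complex_of_real (H x) * x powi (t * int (q n)) \<partial>pow_image \<sigma> r)
         \<longlonglongrightarrow> complex_of_real c1 * complex_of_real (\<integral>x. H x \<partial>pow_image \<sigma> r)"
      if "H \<in> borel_measurable borel" "\<And>x. 0 \<le> H x \<and> H x \<le> 1" for H
      using spectral_side[OF E assms(5,6,8,11,13)] that by blast
    show "(\<lambda>n. \<integral>x. complex_of_real (H x) * x powi (t * int (q n)) \<partial>pow_image \<sigma> s)
         \<longlonglongrightarrow> complex_of_real c2 * complex_of_real (\<integral>x. H x \<partial>pow_image \<sigma> s)"
      if "H \<in> borel_measurable borel" "\<And>x. 0 \<le> H x \<and> H x \<le> 1" for H
      using spectral_side[OF E assms(5,6,8,11,14)] that by blast
  qed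
qed


end
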